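(* Let $\bar\varepsilon>0$ and let $(W_t)_{t\in[-\bar\varepsilon,\bar\varepsilon]}$ be a process with law $\mu_{\bar\varepsilon}$, $\mu_{-,\bar\varepsilon}$ or $\mu_{+,\bar\varepsilon}$. Let $(W''_t)_{t\in[-\bar\varepsilon,\bar\varepsilon]}$ be a Brownian motion whose increments $(W''_t-W''_{-\bar\varepsilon})_t$ are independent of $W$, with $W''_{-\bar\varepsilon}\ge W_{-\bar\varepsilon}$, and let $W'$ be the reflection of $W''$ on $W$. Then for every $\delta>0$ there exists $\bar\varepsilon'\in(0,\bar\varepsilon]$ such that $\mathbb{P}(\forall t\in[-\bar\varepsilon',\bar\varepsilon'],\ W'_t>W_t)\ge1-\delta$.
   Context: All Brownian motions have a common variance $\sigma^2>0$ per unit time. Reflection: for $a<b$, a continuous $f:[a,b]\to\mathbb{R}$ and a Brownian path $B$ with $B_a\ge f(a)$, the reflection of $B$ on $f$ is the process $B'$ defined as follows: if $B_a=f(a)$, $B'_t=B_t+\sup_{a\le s\le t}(f(s)-B_s)$; if $B_a>f(a)$, with $t_0=b\wedge\inf\{t\in[a,b]:B_t=f(t)\}$, $B'_t=B_t$ for $t\le t_0$ and $B'_t=B_t+\sup_{t_0\le s\le t}(f(s)-B_s)$ for $t\in[t_0,b]$. Laws: $\mu_{\bar\varepsilon}$ is the law of a two-sided Brownian motion $(W_t)_{t\in[-\bar\varepsilon,\bar\varepsilon]}$ with $W_0=0$; $\mu_{-,\bar\varepsilon}$ is the law of $W'$ with $W'_t=W_t$ on $[-\bar\varepsilon,0]$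 and $(W'_t)_{t\in[0,\bar\varepsilon]}$ an independent Brownian motion started at $W'_0=0$ reflected on $(W_t)_{t\in[0,\bar\varepsilon]}$; $\mu_{+,\bar\varepsilon}$ is the law of $W'$ with $W'_t=W_t$ on $[0,\bar\varepsilon]$ and $(W'_{-t})_{t\in[0,\bar\varepsilon]}$ an independent Brownian motion started at $0$ reflected on $(W_{-t})_{t\in[0,\bar\varepsilon]}$. *)

theory Defs
  imports "HOL-Probability.Probability"
begin

text \<open>Processes are functions X :: real => 'a => real (time, outcome).
  The parameter sig is the standard deviation per unit time (variance sig^2 per unit time).\<close>

definition bm_on :: "'a measure \<Rightarrow> real \<Rightarrow> real \<Rightarrow> real \<Rightarrow> (real \<Rightarrow> 'a \<Rightarrow> real) \<Rightarrow> bool" where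
  "bm_on M sig a b X \<longleftrightarrow>
     prob_space M \<and>
     (\<forall>t\<in>{a..b}. X t \<in> borel_measurable M) \<and>
     (\<forall>\<omega>\<in>space M. continuous_on {a..b} (\<lambda>t. X t \<omega>)) \<and>
     (\<forall>(n::nat) (ts::nat \<Rightarrow> real).
        a \<le> ts 0 \<and> ts n \<le> b \<and> (\<forall>i<n. ts i < ts (Suc i)) \<longrightarrow>
          prob_space.indep_vars M (\<lambda>_. borel) (\<lambda>i \<omega>. X (ts (Suc i)) \<omega> - X (ts i) \<omega>) {..<n} \<and>
          (\<forall>i<n. distributed M lborel (\<lambda>\<omega>. X (ts (Suc i)) \<omega> - X (ts i) \<omega>)
                   (\<lambda>x. ennreal (normal_density 0 (sig * sqrt (ts (Suc i) - ts i)) x))))"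

definition path_map :: "real set \<Rightarrow> (real \<Rightarrow> 'a \<Rightarrow> real) \<Rightarrow> 'a \<Rightarrow> (real \<Rightarrow> real)" where
  "path_map I X = (\<lambda>\<omega>. restrict (\<lambda>t. X t \<omega>) I)"

definition path_law :: "'a measure \<Rightarrow> real set \<Rightarrow> (real \<Rightarrow> 'a \<Rightarrow> real) \<Rightarrow> (real \<Rightarrow> real) measure" where
  "path_law M I X = distr M (Pi\<^sub>M I (\<lambda>_. borel)) (path_map I X)"

definition reflect :: "real \<Rightarrow> real \<Rightarrow> (real \<Rightarrow> real) \<Rightarrow> (real \<Rightarrow> real) \<Rightarrow> real \<Rightarrow> real" where
  "reflect a b f B t =
     (if B a = f a then B t + Sup ((\<lambda>s. f s - B s) ` {a..t})
      else (let Z = {s\<in>{a..b}. B s = f s};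
                t0 = (if Z = {} then b else min b (Inf Z))
            in if t \<le> t0 then B t else B t + Sup ((\<lambda>s. f s - B s) ` {t0..t})))"

definition two_sided_bm :: "'a measure \<Rightarrow> real \<Rightarrow> real \<Rightarrow> (real \<Rightarrow> 'a \<Rightarrow> real) \<Rightarrow> bool" where
  "two_sided_bm M sig e W \<longleftrightarrow> bm_on M sig (-e) e W \<and> (\<forall>\<omega>\<in>space M. W 0 \<omega> = 0)"

definition cont_process :: "'a measure \<Rightarrow> real \<Rightarrow> (real \<Rightarrow> 'a \<Rightarrow> real) \<Rightarrow> bool" where
  "cont_process M e X \<longleftrightarrow> prob_space M \<and> (\<forall>t\<in>{-e..e}. X t \<in> borel_measurable M) \<and>
     (\<forall>\<omega>\<in>space M. continuous_on {-e..e} (\<lambda>t. X t \<omega>))"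

type_synonym aux_space = "(real \<Rightarrow> real) \<times> (real \<Rightarrow> real)"

definition has_law_mu :: "'a measure \<Rightarrow> real \<Rightarrow> real \<Rightarrow> (real \<Rightarrow> 'a \<Rightarrow> real) \<Rightarrow> bool" where
  "has_law_mu M sig e X \<longleftrightarrow> cont_process M e X \<and>
     (\<exists>(N::aux_space measure) V. two_sided_bm N sig e V \<and>
        path_law M {-e..e} X = path_law N {-e..e} V)"

definition has_law_mu_minus :: "'a measure \<Rightarrow> real \<Rightarrow> real \<Rightarrow> (real \<Rightarrow> 'a \<Rightarrow> real) \<Rightarrow> bool" where
  "has_law_mu_minus M sig e X \<longleftrightarrow> cont_process M e X \<and>
     (\<exists>(N::aux_space measure) V B. two_sided_bm N sig e V \<and> bm_on N sig 0 e B \<and>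
        (\<forall>\<omega>\<in>space N. B 0 \<omega> = 0) \<and>
        prob_space.indep_var N (Pi\<^sub>M {-e..e} (\<lambda>_. borel)) (path_map {-e..e} V)
                               (Pi\<^sub>M {0..e} (\<lambda>_. borel)) (path_map {0..e} B) \<and>
        path_law M {-e..e} X =
          path_law N {-e..e} (\<lambda>t \<omega>. if t \<le> 0 then V t \<omega>
                                      else reflect 0 e (\<lambda>s. V s \<omega>) (\<lambda>s. B s \<omega>) t))"

definition has_law_mu_plus :: "'a measure \<Rightarrow> real \<Rightarrow> real \<Rightarrow> (real \<Rightarrow> 'a \<Rightarrow> real) \<Rightarrow> bool" where
  "has_law_mu_plus M sig e X \<longleftrightarrow> cont_process M e X \<and>
     (\<exists>(N::aux_space measure) V B. two_sided_bm N sig e V \<and> bm_on N sig 0 e B \<and>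
        (\<forall>\<omega>\<in>space N. B 0 \<omega> = 0) \<and>
        prob_space.indep_var N (Pi\<^sub>M {-e..e} (\<lambda>_. borel)) (path_map {-e..e} V)
                               (Pi\<^sub>M {0..e} (\<lambda>_. borel)) (path_map {0..e} B) \<and>
        path_law M {-e..e} X =
          path_law N {-e..e} (\<lambda>t \<omega>. if 0 \<le> t then V t \<omega>
                                      else reflect 0 e (\<lambda>s. V (-s) \<omega>) (\<lambda>s. B s \<omega>) (-t)))"

end

theory Submission
  imports Defs
begin


definition Dn :: "real \<Rightarrow> real \<Rightarrow> real set" where
  "Dn c d = insert d (\<rat> \<inter> {c..d})"

lemma countable_Dn: "countable (Dn c d)"
  unfolding Dn_def by (auto intro: countable_rat)

lemma Dn_sub: "c \<le> d \<Longrightarrow> Dn c d \<subseteq> {c..d}"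
  unfolding Dn_def by auto

lemma Dn_approx:
  assumes "c \<le> x" "x \<le> d" "0 < \<epsilon>"
  shows "\<exists>q\<in>Dn c d. \<bar>q - x\<bar> < \<epsilon>"
proof (cases "x = d")
  case True then show ?thesis using assms by (auto simp: Dn_def)
next
  case False
  then have "x < min (x + \<epsilon>) d" using assms by auto
  then obtain r where "r \<in> \<rat>" "x < r" "r < min (x + \<epsilon>) d" using Rats_dense_in_real by blast
  then show ?thesis using assms by (intro bexI[of _ r]) (auto simp: Dn_def)
qed

lemma cont_pos_iff:
  fixes \<phi> :: "real \<Rightarrow> real"
  assumes c: "continuous_on {c..d} \<phi>" and cd: "c \<le> d"
  shows "(\<forall>t\<in>{c..d}. \<phi> t > 0) \<longleftrightarrow> (\<exists>j::nat. \<forall>q\<in>Dn c d. \<phi> q \<ge> 1 / Suc j)"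
proof
  assume pos: "\<forall>t\<in>{c..d}. \<phi> t > 0"
  obtain x where x: "x \<in> {c..d}" "\<forall>y\<in>{c..d}. \<phi> x \<le> \<phi> y"
    using continuous_attains_inf[OF compact_Icc _ c] cd by auto
  then have "\<phi> x > 0" using pos by auto
  then obtain n where n: "n > 0" "inverse (real n) < \<phi> x" using ex_inverse_of_nat_less by blast
  define j where "j = n - 1"
  have "Suc j = n" using n by (simp add: j_def)
  then have "inverse (real (Suc j)) < \<phi> x" using n by simp
  then show "\<exists>j::nat. \<forall>q\<in>Dn c d. \<phi> q \<ge> 1 / Suc j"
    using x Dn_sub[OF cd] by (intro exI[of _ j]) (force simp: inverse_eq_divide)
next
  assume "\<exists>j::nat. \<forall>q\<in>Dn c d. \<phi> q \<ge> 1 / Suc j"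
  then obtain j where j: "\<forall>q\<in>Dn c d. \<phi> q \<ge> 1 / Suc j" by blast
  show "\<forall>t\<in>{c..d}. \<phi> t > 0"
  proof (rule ccontr)
    assume "\<not> (\<forall>t\<in>{c..d}. \<phi> t > 0)"
    then obtain t where t: "t \<in> {c..d}" "\<phi> t \<le> 0" by auto
    have ep: "(0::real) < 1 / Suc j" by simp
    obtain \<delta> where \<delta>: "\<delta> > 0" "\<forall>x'\<in>{c..d}. dist x' t < \<delta> \<longrightarrow> dist (\<phi> x') (\<phi> t) < 1 / Suc j"
      using c t ep unfolding continuous_on_iff by metis
    obtain q where q: "q \<in> Dn c d" "\<bar>q - t\<bar> < \<delta>" using Dn_approx[of c t d \<delta>] t \<delta> by auto
    then have "dist (\<phi> q) (\<phi> t) < 1 / Suc j" using \<delta> Dn_sub[OF cd] by (auto simp: dist_real_def)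
    then have "\<phi> q < 1 / Suc j" using t by (auto simp: dist_real_def)
    then show False using j q by force
  qed
qed

lemma cont_zero_iff:
  fixes \<phi> :: "real \<Rightarrow> real"
  assumes c: "continuous_on {c..d} \<phi>" and cd: "c \<le> d"
  shows "(\<exists>z\<in>{c..d}. \<phi> z = 0) \<longleftrightarrow> (\<forall>j::nat. \<exists>q\<in>Dn c d. \<bar>\<phi> q\<bar> < 1 / Suc j)"
proof -
  have c': "continuous_on {c..d} (\<lambda>t. \<bar>\<phi> t\<bar>)" using c by (intro continuous_intros)
  have "(\<forall>t\<in>{c..d}. \<bar>\<phi> t\<bar> > 0) \<longleftrightarrow> (\<exists>j::nat. \<forall>q\<in>Dn c d. \<bar>\<phi> q\<bar> \<ge> 1 / Suc j)"
    by (rule cont_pos_iff[OF c' cd])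
  then show ?thesis by (auto simp: not_le[symmetric])
qed

lemma bdd_above_cont_image:
  fixes \<phi> :: "real \<Rightarrow> real"
  assumes "continuous_on {c..d} \<phi>" "S \<subseteq> {c..d}"
  shows "bdd_above (\<phi> ` S)"
proof -
  have "bounded (\<phi> ` {c..d})" using compact_continuous_image[OF assms(1) compact_Icc] compact_imp_bounded by blast
  then have "bdd_above (\<phi> ` {c..d})" by (rule bounded_imp_bdd_above)
  then show ?thesis using assms(2) by (meson bdd_above_mono image_mono)
qed

lemma sup_dense:
  fixes \<phi> :: "real \<Rightarrow> real"
  assumes c: "continuous_on {c..d} \<phi>" and cd: "c \<le> d"
  shows "Sup (\<phi> ` {c..d}) = Sup (\<phi> ` Dn c d)"
proof (rule antisym)
  have ne: "Dn c d \<noteq> {}" by (simp add: Dn_def)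
  have bdd: "bdd_above (\<phi> ` Dn c d)" using bdd_above_cont_image[OF c Dn_sub[OF cd]] .
  show "Sup (\<phi> ` Dn c d) \<le> Sup (\<phi> ` {c..d})"
    using ne Dn_sub[OF cd] bdd_above_cont_image[OF c order_refl]
    by (intro cSup_subset_mono) auto
  show "Sup (\<phi> ` {c..d}) \<le> Sup (\<phi> ` Dn c d)"
  proof (rule cSup_least)
    show "\<phi> ` {c..d} \<noteq> {}" using cd by auto
    fix y assume "y \<in> \<phi> ` {c..d}"
    then obtain t where t: "t \<in> {c..d}" "y = \<phi> t" by auto
    show "y \<le> Sup (\<phi> ` Dn c d)"
    proof (rule field_le_epsilon)
      fix \<epsilon> :: real assume ep: "0 < \<epsilon>"
      obtain \<delta> where \<delta>: "\<delta> > 0" "\<forall>x'\<in>{c..d}. dist x' t < \<delta> \<longrightarrow> dist (\<phi> x') (\<phi> t) < \<epsilon>"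
        using c t ep unfolding continuous_on_iff by metis
      obtain q where q: "q \<in> Dn c d" "\<bar>q - t\<bar> < \<delta>" using Dn_approx[of c t d \<delta>] t \<delta> by auto
      then have "dist (\<phi> q) (\<phi> t) < \<epsilon>" using \<delta> Dn_sub[OF cd] by (auto simp: dist_real_def)
      moreover have "\<phi> q \<le> Sup (\<phi> ` Dn c d)" using q bdd by (intro cSup_upper) auto
      ultimately show "y \<le> Sup (\<phi> ` Dn c d) + \<epsilon>" using t by (auto simp: dist_real_def)
    qed
  qed
qed

lemma running_sup_cont:
  fixes k :: "real \<Rightarrow> real"
  assumes c: "continuous_on {c..d} k"
  shows "continuous_on {c..d} (\<lambda>t. Sup (k ` {c..t}))"
proof -
  let ?R = "\<lambda>t. Sup (k ` {c..t})"
  have uc: "uniformly_continuous_on {c..d} k" using compact_uniformly_continuous[OF c compact_Icc] .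
  have bdd: "\<And>t. t \<le> d \<Longrightarrow> bdd_above (k ` {c..t})" using bdd_above_cont_image[OF c] by auto
  have key: "?R t \<le> ?R t' \<and> ?R t' \<le> ?R t + \<epsilon>"
    if "c \<le> t" "t \<le> t'" "t' \<le> d" "\<forall>x\<in>{c..d}. \<forall>x'\<in>{c..d}. dist x' x < \<delta> \<longrightarrow> dist (k x') (k x) < \<epsilon>"
       "t' - t < \<delta>" for t t' \<epsilon> \<delta>
  proof
    show "?R t \<le> ?R t'" using that bdd[of t'] by (intro cSup_subset_mono) auto
    show "?R t' \<le> ?R t + \<epsilon>"
    proof (rule cSup_least)
      show "k ` {c..t'} \<noteq> {}" using that by auto
      fix y assume "y \<in> k ` {c..t'}"
      then obtain s where s: "s \<in> {c..t'}" "y = k s" by auto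
      have kt: "k t \<le> ?R t" using that bdd[of t] by (intro cSup_upper) auto
      show "y \<le> ?R t + \<epsilon>"
      proof (cases "s \<le> t")
        case True
        then have "k s \<le> ?R t" using that s bdd[of t] by (intro cSup_upper) auto
        moreover have "dist (k t) (k t) < \<epsilon>" using that(1,2,3,5) that(4)[rule_format, of t t] by auto
        then have "0 < \<epsilon>" by simp
        ultimately show ?thesis using s by simp
      next
        case False
        then have "dist s t < \<delta>" using s that by (auto simp: dist_real_def)
        then have "dist (k s) (k t) < \<epsilon>" using that s by auto
        then show ?thesis using s kt by (auto simp: dist_real_def)
      qed
    qed
  qed
  show ?thesis
    unfolding continuous_on_iff
  proof (intro ballI allI impI)
    fix x \<epsilon> assume x: "x \<in> {c..d}" and ep: "(0::real) < \<epsilon>"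
    obtain \<delta> where \<delta>: "\<delta> > 0" "\<forall>x\<in>{c..d}. \<forall>x'\<in>{c..d}. dist x' x < \<delta> \<longrightarrow> dist (k x') (k x) < \<epsilon>/2"
      using uc ep unfolding uniformly_continuous_on_def by (metis half_gt_zero)
    show "\<exists>\<delta>>0. \<forall>x'\<in>{c..d}. dist x' x < \<delta> \<longrightarrow> dist (?R x') (?R x) < \<epsilon>"
    proof (intro exI[of _ \<delta>] conjI ballI impI)
      fix x' assume x': "x' \<in> {c..d}" "dist x' x < \<delta>"
      show "dist (?R x') (?R x) < \<epsilon>"
      proof (cases "x \<le> x'")
        case True
        then have "?R x \<le> ?R x' \<and> ?R x' \<le> ?R x + \<epsilon>/2" using key[of x x' \<delta> "\<epsilon>/2"] x x' \<delta> by (auto simp: dist_real_def)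
        then show ?thesis using ep by (auto simp: dist_real_def)
      next
        case False
        then have "?R x' \<le> ?R x \<and> ?R x \<le> ?R x' + \<epsilon>/2" using key[of x' x \<delta> "\<epsilon>/2"] x x' \<delta> by (auto simp: dist_real_def)
        then show ?thesis using ep by (auto simp: dist_real_def)
      qed
    qed (use \<delta> in auto)
  qed
qed


definition kfun :: "real \<Rightarrow> (real \<Rightarrow> real) \<Rightarrow> (real \<Rightarrow> real) \<Rightarrow> real \<Rightarrow> real" where
  "kfun a f B s = (if \<exists>z\<in>{a..s}. B z = f z then f s - B s else 0)"

lemma max_image1: "(a::real) \<le> c0 \<Longrightarrow> c0 \<le> t \<Longrightarrow> (\<lambda>s. max s c0) ` {a..t} = {c0..t}"
proof -
  assume h: "a \<le> c0" "c0 \<le> t"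
  show ?thesis
  proof (intro equalityI subsetI)
    fix y assume "y \<in> (\<lambda>s. max s c0) ` {a..t}"
    then obtain s where "s \<in> {a..t}" "y = max s c0" by blast
    then show "y \<in> {c0..t}" using h by (simp add: max_def)
  next
    fix y assume y: "y \<in> {c0..t}"
    then have "y = max y c0" "y \<in> {a..t}" using h by (auto simp: max_def)
    then show "y \<in> (\<lambda>s. max s c0) ` {a..t}" by blast
  qed
qed

lemma max_image2: "(a::real) \<le> t \<Longrightarrow> t \<le> c0 \<Longrightarrow> (\<lambda>s. max s c0) ` {a..t} = {c0}"
proof -
  assume "a \<le> t" "t \<le> c0"
  then have "(\<lambda>s. max s c0) ` {a..t} = (\<lambda>s. c0) ` {a..t}" by (intro image_cong) (auto simp: max_def)
  also have "\<dots> = {c0}" using \<open>a \<le> t\<close> by (intro image_constant) auto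
  finally show ?thesis .
qed

lemma Z_facts:
  assumes f: "continuous_on {a..b} f" and B: "continuous_on {a..b} B"
    and ne: "{s\<in>{a..b}. B s = f s} \<noteq> {}"
  defines "c0 \<equiv> Inf {s\<in>{a..b}. B s = f s}"
  shows "c0 \<in> {a..b}" "B c0 = f c0" "\<forall>s\<in>{a..b}. kfun a f B s = f (max s c0) - B (max s c0)"
    "\<forall>z\<in>{a..b}. B z = f z \<longrightarrow> c0 \<le> z"
proof -
  let ?Z = "{s\<in>{a..b}. B s = f s}"
  have "closed {s\<in>{a..b}. B s - f s = 0}"
    using B f by (intro continuous_closed_preimage_constant continuous_intros) auto
  then have cl: "closed ?Z" by simp
  have bb: "bdd_below ?Z" by (auto intro!: bdd_belowI[of _ a])
  have c0Z: "c0 \<in> ?Z" unfolding c0_def using closed_contains_Inf[OF ne bb cl] .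
  then show "c0 \<in> {a..b}" "B c0 = f c0" by auto
  show le: "\<forall>z\<in>{a..b}. B z = f z \<longrightarrow> c0 \<le> z"
    unfolding c0_def using bb by (auto intro!: cInf_lower)
  show "\<forall>s\<in>{a..b}. kfun a f B s = f (max s c0) - B (max s c0)"
  proof
    fix s assume s: "s \<in> {a..b}"
    show "kfun a f B s = f (max s c0) - B (max s c0)"
    proof (cases "c0 \<le> s")
      case True
      then have "\<exists>z\<in>{a..s}. B z = f z" using c0Z by auto
      then show ?thesis using True by (simp add: kfun_def max_def)
    next
      case False
      then have "\<not> (\<exists>z\<in>{a..s}. B z = f z)" using le s by force
      then show ?thesis using False c0Z by (simp add: kfun_def max_def)
    qed
  qed
qed

lemma kfun_cont:
  assumes f: "continuous_on {a..b} f" and B: "continuous_on {a..b} B"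
  shows "continuous_on {a..b} (kfun a f B)"
proof (cases "{s\<in>{a..b}. B s = f s} = {}")
  case True
  then have "\<forall>s\<in>{a..b}. kfun a f B s = 0" by (force simp: kfun_def)
  then show ?thesis using continuous_on_cong[of "{a..b}" "{a..b}" "kfun a f B" "\<lambda>_. 0"] continuous_on_const by auto
next
  case False
  note Z = Z_facts[OF f B False]
  define c0 where "c0 = Inf {s\<in>{a..b}. B s = f s}"
  have mc: "continuous_on {a..b} (\<lambda>s. max s c0)" by (intro continuous_intros)
  have mi: "(\<lambda>s. max s c0) ` {a..b} \<subseteq> {a..b}" using Z(1) by (auto simp: c0_def)
  have "continuous_on {a..b} (\<lambda>s. f (max s c0) - B (max s c0))"
    by (intro continuous_intros continuous_on_compose2[OF f mc mi] continuous_on_compose2[OF B mc mi])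
  then show ?thesis using Z(3) by (subst continuous_on_cong[OF refl]) (auto simp: c0_def)
qed

lemma reflect_unified:
  assumes t: "a \<le> t" "t \<le> b" and f: "continuous_on {a..b} f" and B: "continuous_on {a..b} B"
  shows "reflect a b f B t = B t + Sup (kfun a f B ` {a..t})"
proof (cases "{s\<in>{a..b}. B s = f s} = {}")
  case True
  then have "\<forall>s\<in>{a..b}. kfun a f B s = 0" by (force simp: kfun_def)
  then have "kfun a f B ` {a..t} = {0}" using t by force
  moreover have "B a \<noteq> f a" using True t by auto
  ultimately show ?thesis using True t by (simp add: reflect_def Let_def)
next
  case False
  note Z = Z_facts[OF f B False]
  define c0 where "c0 = Inf {s\<in>{a..b}. B s = f s}"
  have kim: "kfun a f B ` {a..t} = (\<lambda>s. f s - B s) ` ((\<lambda>s. max s c0) ` {a..t})"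
    unfolding image_image using Z(3) t by (intro image_cong) (auto simp: c0_def)
  show ?thesis
  proof (cases "t \<le> c0")
    case True
    then have "kfun a f B ` {a..t} = {0}" using kim max_image2[OF t(1) True] Z(2) by (simp add: c0_def)
    then have S0: "Sup (kfun a f B ` {a..t}) = 0" by simp
    have "reflect a b f B t = B t"
    proof (cases "B a = f a")
      case True
      then have "c0 \<le> a" using Z(4) t by (simp add: c0_def)
      then have ta: "t = a" using \<open>t \<le> c0\<close> t by simp
      have "reflect a b f B t = B t + Sup ((\<lambda>s. f s - B s) ` {a..t})"
        using True by (simp add: reflect_def)
      also have "(\<lambda>s. f s - B s) ` {a..t} = {f a - B a}" using ta by simp
      finally show ?thesis using True by simp
    next
      case nB: False
      have m: "min b c0 = c0" using Z(1) by (simp add: c0_def)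
      have "reflect a b f B t = (if t \<le> min b c0 then B t else B t + Sup ((\<lambda>s. f s - B s) ` {min b c0..t}))"
        unfolding reflect_def Let_def c0_def by (simp only: nB False if_False)
      then show ?thesis using m \<open>t \<le> c0\<close> by simp
    qed
    then show ?thesis using S0 by simp
  next
    case tc: False
    then have ki: "kfun a f B ` {a..t} = (\<lambda>s. f s - B s) ` {c0..t}"
      using kim max_image1[of a c0 t] Z(1) by (simp add: c0_def)
    have m: "min b c0 = c0" using Z(1) by (simp add: c0_def)
    have "reflect a b f B t = B t + Sup ((\<lambda>s. f s - B s) ` {c0..t})"
    proof (cases "B a = f a")
      case True
      then have "c0 \<le> a" using Z(4) t by (simp add: c0_def)
      then have "c0 = a" using Z(1) by (simp add: c0_def)
      then show ?thesis using True by (simp add: reflect_def)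
    next
      case nB: False
      have "reflect a b f B t = (if t \<le> min b c0 then B t else B t + Sup ((\<lambda>s. f s - B s) ` {min b c0..t}))"
        unfolding reflect_def Let_def c0_def by (simp only: nB False if_False)
      then show ?thesis using m tc by simp
    qed
    then show ?thesis using ki by simp
  qed
qed

lemma reflect_cont:
  assumes ab: "a \<le> b" and f: "continuous_on {a..b} f" and B: "continuous_on {a..b} B"
  shows "continuous_on {a..b} (reflect a b f B)"
proof -
  have "continuous_on {a..b} (\<lambda>t. B t + Sup (kfun a f B ` {a..t}))"
    by (intro continuous_intros B running_sup_cont kfun_cont f)
  then show ?thesis using reflect_unified[OF _ _ f B] by (subst continuous_on_cong[OF refl]) auto
qed

lemma reflect_ge:
  assumes t: "a \<le> s" "s \<le> t" "t \<le> b" and f: "continuous_on {a..b} f" and B: "continuous_on {a..b} B"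
    and start: "B a \<ge> f a"
  shows "reflect a b f B t \<ge> B t + (f s - B s)"
proof -
  have bdd: "bdd_above (kfun a f B ` {a..t})"
    using bdd_above_cont_image[OF kfun_cont[OF f B]] t by auto
  have "f s - B s \<le> kfun a f B s"
  proof (cases "\<exists>z\<in>{a..s}. B z = f z")
    case True then show ?thesis by (simp add: kfun_def)
  next
    case nz: False
    have "f s - B s < 0"
    proof (rule ccontr)
      assume "\<not> f s - B s < 0"
      moreover have "f a - B a \<le> 0" using start by simp
      moreover have "continuous_on {a..s} (\<lambda>x. f x - B x)"
        using f B t by (intro continuous_intros) (auto elim: continuous_on_subset)
      ultimately obtain x where x: "a \<le> x" "x \<le> s" "f x - B x = 0"
        using IVT'[of "\<lambda>x. f x - B x" a 0 s] t by force
      then have "B x = f x" by simp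
      moreover have "x \<in> {a..s}" using x by simp
      ultimately show False using nz by blast
    qed
    then show ?thesis using nz by (simp add: kfun_def)
  qed
  also have "\<dots> \<le> Sup (kfun a f B ` {a..t})" using bdd t by (intro cSup_upper) auto
  finally show ?thesis using reflect_unified[of a t b f B] t f B by simp
qed




lemma Dn_ne: "Dn c d \<noteq> {}" by (simp add: Dn_def)

lemma meas_pos:
  fixes \<phi> :: "real \<Rightarrow> 'a \<Rightarrow> real"
  assumes cd: "c \<le> d" and cont: "\<forall>\<omega>\<in>space M. continuous_on {c..d} (\<lambda>t. \<phi> t \<omega>)"
    and meas: "\<forall>t\<in>{c..d}. \<phi> t \<in> borel_measurable M"
  shows "{\<omega>\<in>space M. \<forall>t\<in>{c..d}. \<phi> t \<omega> > 0} \<in> sets M"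
proof -
  have eq: "{\<omega>\<in>space M. \<forall>t\<in>{c..d}. \<phi> t \<omega> > 0} = (\<Union>j::nat. \<Inter>q\<in>Dn c d. {\<omega>\<in>space M. 1/Suc j \<le> \<phi> q \<omega>})"
  proof (intro equalityI subsetI)
    fix \<omega> assume "\<omega> \<in> {\<omega>\<in>space M. \<forall>t\<in>{c..d}. \<phi> t \<omega> > 0}"
    then have "\<omega> \<in> space M" "\<forall>t\<in>{c..d}. \<phi> t \<omega> > 0" by auto
    then show "\<omega> \<in> (\<Union>j::nat. \<Inter>q\<in>Dn c d. {\<omega>\<in>space M. 1/Suc j \<le> \<phi> q \<omega>})"
      using cont_pos_iff[OF _ cd, of "\<lambda>t. \<phi> t \<omega>"] cont by auto
  next
    fix \<omega> assume "\<omega> \<in> (\<Union>j::nat. \<Inter>q\<in>Dn c d. {\<omega>\<in>space M. 1/Suc j \<le> \<phi> q \<omega>})"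
    then obtain j::nat where j: "\<forall>q\<in>Dn c d. \<omega> \<in> space M \<and> 1/Suc j \<le> \<phi> q \<omega>" by auto
    then have sp: "\<omega> \<in> space M" using Dn_ne by auto
    have "\<forall>t\<in>{c..d}. \<phi> t \<omega> > 0"
      using cont_pos_iff[OF _ cd, of "\<lambda>t. \<phi> t \<omega>"] cont sp j by auto
    then show "\<omega> \<in> {\<omega>\<in>space M. \<forall>t\<in>{c..d}. \<phi> t \<omega> > 0}" using sp by auto
  qed
  have mq: "\<And>j q. q \<in> Dn c d \<Longrightarrow> {\<omega>\<in>space M. 1/Suc j \<le> \<phi> q \<omega>} \<in> sets M"
  proof -
    fix j q assume "q \<in> Dn c d"
    then have [measurable]: "\<phi> q \<in> borel_measurable M" using meas Dn_sub[OF cd] by auto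
    show "{\<omega>\<in>space M. 1/Suc j \<le> \<phi> q \<omega>} \<in> sets M" by measurable
  qed
  have mI: "\<And>j::nat. (\<Inter>q\<in>Dn c d. {\<omega>\<in>space M. 1/Suc j \<le> \<phi> q \<omega>}) \<in> sets M"
    by (intro sets.countable_INT' countable_Dn Dn_ne image_subsetI mq)
  show ?thesis unfolding eq by (intro sets.countable_UN'' mI countableI_type)
qed

lemma meas_zero:
  fixes \<phi> :: "real \<Rightarrow> 'a \<Rightarrow> real"
  assumes cd: "c \<le> d" and cont: "\<forall>\<omega>\<in>space M. continuous_on {c..d} (\<lambda>t. \<phi> t \<omega>)"
    and meas: "\<forall>t\<in>{c..d}. \<phi> t \<in> borel_measurable M"
  shows "{\<omega>\<in>space M. \<exists>z\<in>{c..d}. \<phi> z \<omega> = 0} \<in> sets M"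
proof -
  have "{\<omega>\<in>space M. \<forall>t\<in>{c..d}. \<bar>\<phi> t \<omega>\<bar> > 0} \<in> sets M"
    using cont meas by (intro meas_pos cd) (auto intro: continuous_intros)
  then have "space M - {\<omega>\<in>space M. \<forall>t\<in>{c..d}. \<bar>\<phi> t \<omega>\<bar> > 0} \<in> sets M" by auto
  also have "space M - {\<omega>\<in>space M. \<forall>t\<in>{c..d}. \<bar>\<phi> t \<omega>\<bar> > 0} = {\<omega>\<in>space M. \<exists>z\<in>{c..d}. \<phi> z \<omega> = 0}"
    by auto
  finally show ?thesis .
qed

lemma meas_sup:
  fixes \<phi> :: "real \<Rightarrow> 'a \<Rightarrow> real"
  assumes cd: "c \<le> d" and cont: "\<forall>\<omega>\<in>space M. continuous_on {c..d} (\<lambda>t. \<phi> t \<omega>)"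
    and meas: "\<forall>t\<in>{c..d}. \<phi> t \<in> borel_measurable M"
  shows "(\<lambda>\<omega>. Sup ((\<lambda>t. \<phi> t \<omega>) ` {c..d})) \<in> borel_measurable M"
proof -
  have "(\<lambda>\<omega>. SUP q\<in>Dn c d. \<phi> q \<omega>) \<in> borel_measurable M"
  proof (rule borel_measurable_cSUP)
    show "countable (Dn c d)" by (rule countable_Dn)
    show "\<And>i. i \<in> Dn c d \<Longrightarrow> \<phi> i \<in> borel_measurable M" using meas Dn_sub[OF cd] by auto
    show "\<And>x. x \<in> space M \<Longrightarrow> bdd_above ((\<lambda>i. \<phi> i x) ` Dn c d)"
      using cont by (intro bdd_above_cont_image[OF _ Dn_sub[OF cd]]) auto
  qed
  then show ?thesis
    using sup_dense[OF _ cd] cont by (subst measurable_cong[where g="\<lambda>\<omega>. SUP q\<in>Dn c d. \<phi> q \<omega>"]) auto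
qed

lemma meas_reflect:
  fixes F G :: "real \<Rightarrow> 'a \<Rightarrow> real"
  assumes t: "a \<le> t" "t \<le> b"
    and cF: "\<forall>\<omega>\<in>space M. continuous_on {a..b} (\<lambda>s. F s \<omega>)"
    and cG: "\<forall>\<omega>\<in>space M. continuous_on {a..b} (\<lambda>s. G s \<omega>)"
    and mF: "\<forall>s\<in>{a..b}. F s \<in> borel_measurable M"
    and mG: "\<forall>s\<in>{a..b}. G s \<in> borel_measurable M"
  shows "(\<lambda>\<omega>. reflect a b (\<lambda>s. F s \<omega>) (\<lambda>s. G s \<omega>) t) \<in> borel_measurable M"
proof -
  let ?k = "\<lambda>s \<omega>. kfun a (\<lambda>s. F s \<omega>) (\<lambda>s. G s \<omega>) s"
  have sub: "{a..t} \<subseteq> {a..b}" using t by auto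
  have ck: "\<forall>\<omega>\<in>space M. continuous_on {a..t} (\<lambda>s. ?k s \<omega>)"
  proof
    fix \<omega> assume "\<omega> \<in> space M"
    then have "continuous_on {a..b} (kfun a (\<lambda>s. F s \<omega>) (\<lambda>s. G s \<omega>))"
      using cF cG by (intro kfun_cont) auto
    then show "continuous_on {a..t} (\<lambda>s. ?k s \<omega>)" using continuous_on_subset[OF _ sub] by auto
  qed
  have mk: "\<forall>s\<in>{a..t}. ?k s \<in> borel_measurable M"
  proof
    fix s assume s: "s \<in> {a..t}"
    have sub2: "{a..s} \<subseteq> {a..b}" using s t by auto
    have c2: "\<forall>\<omega>\<in>space M. continuous_on {a..s} (\<lambda>z. G z \<omega> - F z \<omega>)"
    proof
      fix \<omega> assume "\<omega> \<in> space M"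
      then have "continuous_on {a..b} (\<lambda>z. G z \<omega> - F z \<omega>)" using cF cG by (intro continuous_intros) auto
      then show "continuous_on {a..s} (\<lambda>z. G z \<omega> - F z \<omega>)" using continuous_on_subset[OF _ sub2] by auto
    qed
    have m2: "\<forall>z\<in>{a..s}. (\<lambda>\<omega>. G z \<omega> - F z \<omega>) \<in> borel_measurable M"
      using mF mG sub2 by (intro ballI borel_measurable_diff) auto
    have Zs0: "{\<omega>\<in>space M. \<exists>z\<in>{a..s}. G z \<omega> - F z \<omega> = 0} \<in> sets M"
      using s c2 m2 by (intro meas_zero) auto
    have Zs: "{\<omega>\<in>space M. \<exists>z\<in>{a..s}. G z \<omega> = F z \<omega>} \<in> sets M"
      using Zs0 unfolding right_minus_eq .
    have [measurable]: "F s \<in> borel_measurable M" "G s \<in> borel_measurable M" using s t mF mG by auto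
    have mg: "(\<lambda>\<omega>. if \<omega> \<in> {\<omega>\<in>space M. \<exists>z\<in>{a..s}. G z \<omega> = F z \<omega>} then F s \<omega> - G s \<omega> else 0) \<in> borel_measurable M"
      using Zs by (intro measurable_If_set) auto
    have eq: "\<And>\<omega>. \<omega> \<in> space M \<Longrightarrow> ?k s \<omega> = (if \<omega> \<in> {\<omega>\<in>space M. \<exists>z\<in>{a..s}. G z \<omega> = F z \<omega>} then F s \<omega> - G s \<omega> else 0)"
      unfolding kfun_def by simp
    show "?k s \<in> borel_measurable M"
      using iffD2[OF measurable_cong[OF eq] mg] .
  qed
  have mg2: "(\<lambda>\<omega>. G t \<omega> + Sup ((\<lambda>s. ?k s \<omega>) ` {a..t})) \<in> borel_measurable M"
    using meas_sup[OF t(1) ck mk] mG t by (intro borel_measurable_add) auto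
  have eq2: "\<And>\<omega>. \<omega> \<in> space M \<Longrightarrow> reflect a b (\<lambda>s. F s \<omega>) (\<lambda>s. G s \<omega>) t = G t \<omega> + Sup ((\<lambda>s. ?k s \<omega>) ` {a..t})"
    using reflect_unified[OF t] cF cG by blast
  show ?thesis using iffD2[OF measurable_cong[OF eq2] mg2] .
qed




lemma normal_chebyshev:
  assumes "prob_space M" and s: "0 < s" and x: "0 < x"
    and D: "distributed M lborel X (\<lambda>y. ennreal (normal_density 0 s y))"
  shows "measure M {\<omega>\<in>space M. \<bar>X \<omega>\<bar> \<ge> x} \<le> s\<^sup>2 / x\<^sup>2"
proof -
  interpret prob_space M by fact
  have rv[measurable]: "random_variable borel X"
    using distributed_measurable[OF D] by simp
  have "integrable lborel (\<lambda>y. normal_density 0 s y * y^2)"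
    using integrable_normal_moment[where \<mu>=0 and \<sigma>=s and k=2] s by simp
  then have int: "integrable M (\<lambda>\<omega>. X \<omega> ^ 2)"
    using distributed_integrable[OF D, of "\<lambda>y. y^2"] by simp
  have E: "expectation X = 0" using normal_distributed_expectation[OF s D] .
  have V: "variance X = s\<^sup>2" using normal_distributed_variance[OF s D] .
  show ?thesis using Chebyshev_inequality[OF rv int x] E V by simp
qed

lemma normal_density_le: "0 < s \<Longrightarrow> normal_density 0 s x \<le> 1 / (s * sqrt (2*pi))"
proof -
  assume s: "0 < s"
  have "normal_density 0 s x = 1 / sqrt (2 * pi * s\<^sup>2) * exp (-(x - 0)\<^sup>2/ (2 * s\<^sup>2))"
    by (simp add: normal_density_def)
  also have "\<dots> \<le> 1 / sqrt (2 * pi * s\<^sup>2) * 1"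
    by (intro mult_left_mono) auto
  also have "sqrt (2 * pi * s\<^sup>2) = s * sqrt (2*pi)"
    using s by (simp add: real_sqrt_mult mult.commute)
  finally show ?thesis by simp
qed

lemma normal_tail_lower:
  assumes "prob_space M" and s: "0 < s" and b: "0 \<le> b" "b \<le> s/2"
    and D: "distributed M lborel X (\<lambda>y. ennreal (normal_density 0 s y))"
  shows "measure M {\<omega>\<in>space M. X \<omega> > b} \<ge> 1/4" "measure M {\<omega>\<in>space M. X \<omega> < -b} \<ge> 1/4"
proof -
  interpret prob_space M by fact
  have rv[measurable]: "X \<in> borel_measurable M"
    using distributed_measurable[OF D] by simp
  define Q where "Q = density lborel (\<lambda>y. ennreal (normal_density 0 s y))"
  have DQ: "distr M lborel X = Q"
    using distributed_distr_eq_density[OF D] by (simp add: Q_def)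
  have PX: "measure M {\<omega>\<in>space M. X \<omega> \<in> A} = measure Q A" if "A \<in> sets borel" for A
  proof -
    have "measure Q A = measure (distr M lborel X) A" by (simp add: DQ)
    also have "\<dots> = measure M (X -` A \<inter> space M)"
      using that by (subst measure_distr) auto
    moreover have "{\<omega>\<in>space M. X \<omega> \<in> A} = X -` A \<inter> space M" by auto
    ultimately show ?thesis by simp
  qed
  have D': "distributed M lborel (\<lambda>\<omega>. 0 + (-1) * X \<omega>) (\<lambda>y. ennreal (normal_density (0 + (-1)*0) (\<bar>-1\<bar> * s) y))"
    by (rule normal_density_affine[OF D s]) simp
  have DQ': "distr M lborel (\<lambda>\<omega>. - X \<omega>) = Q"
    using distributed_distr_eq_density[OF D'] by (simp add: Q_def)
  have PX': "measure M {\<omega>\<in>space M. - X \<omega> \<in> A} = measure Q A" if "A \<in> sets borel" for A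
  proof -
    have "measure Q A = measure (distr M lborel (\<lambda>\<omega>. - X \<omega>)) A" by (simp add: DQ')
    also have "\<dots> = measure M ((\<lambda>\<omega>. - X \<omega>) -` A \<inter> space M)"
      using that by (subst measure_distr) auto
    moreover have "{\<omega>\<in>space M. - X \<omega> \<in> A} = (\<lambda>\<omega>. - X \<omega>) -` A \<inter> space M" by auto
    ultimately show ?thesis by simp
  qed
  have e1: "measure M {\<omega>\<in>space M. X \<omega> > b} = measure Q {b<..}"
    using PX[of "{b<..}"] by simp
  have e2: "measure M {\<omega>\<in>space M. X \<omega> < -b} = measure Q {b<..}"
    using PX'[of "{b<..}"] by (simp add: less_minus_iff)
  have e3: "measure M {\<omega>\<in>space M. X \<omega> \<in> {-b..b}} = measure Q {-b..b}"
    using PX[of "{-b..b}"] by simp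
  have sum: "measure M {\<omega>\<in>space M. X \<omega> > b} + measure M {\<omega>\<in>space M. X \<omega> < -b}
     + measure M {\<omega>\<in>space M. X \<omega> \<in> {-b..b}} = 1"
  proof -
    have "measure M {\<omega>\<in>space M. X \<omega> > b} + measure M {\<omega>\<in>space M. X \<omega> < -b}
        = measure M ({\<omega>\<in>space M. X \<omega> > b} \<union> {\<omega>\<in>space M. X \<omega> < -b})"
      using b by (intro measure_Un_AE[symmetric]) (auto simp: fmeasurable_eq_sets)
    also have "\<dots> + measure M {\<omega>\<in>space M. X \<omega> \<in> {-b..b}}
       = measure M (({\<omega>\<in>space M. X \<omega> > b} \<union> {\<omega>\<in>space M. X \<omega> < -b}) \<union> {\<omega>\<in>space M. X \<omega> \<in> {-b..b}})"
      by (intro measure_Un_AE[symmetric]) (auto simp: fmeasurable_eq_sets)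
    also have "({\<omega>\<in>space M. X \<omega> > b} \<union> {\<omega>\<in>space M. X \<omega> < -b}) \<union> {\<omega>\<in>space M. X \<omega> \<in> {-b..b}} = space M"
      by auto
    finally show ?thesis using prob_space by simp
  qed
  have "emeasure Q {-b..b} = (\<integral>\<^sup>+y. ennreal (normal_density 0 s y) * indicator {-b..b} y \<partial>lborel)"
    unfolding Q_def by (subst emeasure_density) auto
  also have "\<dots> \<le> (\<integral>\<^sup>+y. ennreal (1 / (s * sqrt (2*pi))) * indicator {-b..b} y \<partial>lborel)"
    by (intro nn_integral_mono) (auto intro!: mult_right_mono ennreal_leI normal_density_le s simp: indicator_def)
  also have "\<dots> = ennreal (1 / (s * sqrt (2*pi))) * (2*b)"
    using b by (simp add: nn_integral_cmult_indicator)
  finally have em: "emeasure Q {-b..b} \<le> ennreal (2*b / (s * sqrt (2*pi)))"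
    using b s by (simp add: ennreal_mult'[symmetric] mult.commute)
  interpret Q: prob_space Q using prob_space_distr[of X lborel] DQ rv by simp
  from em have r: "measure Q {-b..b} \<le> 2*b / (s * sqrt (2*pi))"
    using b s by (simp add: Q.emeasure_eq_measure)
  have "sqrt (2*pi) \<ge> 2"
    using pi_gt3 by (simp add: real_le_rsqrt)
  then have "2*b / (s * sqrt (2*pi)) \<le> 2*b / (s*2)"
    using b s by (intro divide_left_mono mult_pos_pos) auto
  also have "\<dots> \<le> 1/2" using b s by (simp add: field_simps)
  finally have "measure Q {-b..b} \<le> 1/2" using r by linarith
  then show "measure M {\<omega>\<in>space M. X \<omega> > b} \<ge> 1/4" "measure M {\<omega>\<in>space M. X \<omega> < -b} \<ge> 1/4"
    using sum e1 e2 e3 by linarith+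
qed



definition tsg :: "real \<Rightarrow> real \<Rightarrow> nat \<Rightarrow> real" where
  "tsg e m i = - (e / m ^ i)"
definition cg :: "real \<Rightarrow> real \<Rightarrow> real \<Rightarrow> nat \<Rightarrow> real" where
  "cg \<sigma> e m i = \<sigma> * sqrt (e / m ^ i) / 2"
definition fg :: "real \<Rightarrow> real \<Rightarrow> real \<Rightarrow> nat \<Rightarrow> real \<Rightarrow> real" where
  "fg \<sigma> e m i x = (if x \<le> - (cg \<sigma> e m i / 2) then 3/4 else 1)"

lemma tsg_facts:
  assumes e: "e > 0" and m: "m \<ge> 2"
  shows "tsg e m i < tsg e m (Suc i)" "tsg e m 0 = -e" "tsg e m i < 0" "-e \<le> tsg e m i"
    "tsg e m (Suc i) - tsg e m i = e / m ^ i * (1 - 1/m)"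
proof -
  have mp: "m ^ i > 0" using m by simp
  have "e / m ^ Suc i < e / m ^ i" using e m mp by (simp add: divide_strict_left_mono)
  then show "tsg e m i < tsg e m (Suc i)" by (simp add: tsg_def)
  show "tsg e m 0 = -e" by (simp add: tsg_def)
  show "tsg e m i < 0" using e mp by (simp add: tsg_def)
  have "e / m ^ i \<le> e" using e m by (simp add: divide_le_eq one_le_power)
  then show "-e \<le> tsg e m i" by (simp add: tsg_def)
  show "tsg e m (Suc i) - tsg e m i = e / m ^ i * (1 - 1/m)"
    using m by (simp add: tsg_def field_simps)
qed

lemma bm_prob: "bm_on M \<sigma> a b X \<Longrightarrow> prob_space M"
  by (simp add: bm_on_def)

lemma bm_meas: "bm_on M \<sigma> a b X \<Longrightarrow> t \<in> {a..b} \<Longrightarrow> X t \<in> borel_measurable M"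
  by (simp add: bm_on_def)

lemma bm_inc_dist:
  assumes "bm_on M \<sigma> a b X" "a \<le> s" "s < t" "t \<le> b"
  shows "distributed M lborel (\<lambda>\<omega>. X t \<omega> - X s \<omega>) (\<lambda>x. ennreal (normal_density 0 (\<sigma> * sqrt (t - s)) x))"
proof -
  define ts where "ts = (\<lambda>j::nat. if j = 0 then s else t)"
  have "a \<le> ts 0 \<and> ts 1 \<le> b \<and> (\<forall>i<1. ts i < ts (Suc i))" using assms by (simp add: ts_def)
  then have "\<forall>i<1. distributed M lborel (\<lambda>\<omega>. X (ts (Suc i)) \<omega> - X (ts i) \<omega>)
                   (\<lambda>x. ennreal (normal_density 0 (\<sigma> * sqrt (ts (Suc i) - ts i)) x))"
    using assms(1) unfolding bm_on_def by blast
  then show ?thesis by (simp add: ts_def)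
qed

lemma bm_indep:
  assumes "bm_on M \<sigma> a b X" "a \<le> ts 0" "ts n \<le> b" "\<forall>i<n. ts i < ts (Suc i)"
  shows "prob_space.indep_vars M (\<lambda>_. borel) (\<lambda>i \<omega>. X (ts (Suc i)) \<omega> - X (ts i) \<omega>) {..<n}"
  using assms unfolding bm_on_def by blast

lemma cheb16:
  assumes bm: "bm_on M \<sigma> (-e) e X" and \<sigma>: "\<sigma> > 0" and e: "e > 0" and m: "m \<ge> 2"
  shows "measure M {\<omega>\<in>space M. \<bar>X 0 \<omega> - X (tsg e m (Suc i)) \<omega>\<bar> \<ge> cg \<sigma> e m i / 2} \<le> 16 / m"
proof -
  note tf = tsg_facts[OF e m]
  have D: "distributed M lborel (\<lambda>\<omega>. X 0 \<omega> - X (tsg e m (Suc i)) \<omega>)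
     (\<lambda>x. ennreal (normal_density 0 (\<sigma> * sqrt (0 - tsg e m (Suc i))) x))"
    using bm_inc_dist[OF bm tf(4) tf(3)] e by simp
  have mp: "m ^ i > 0" using m by simp
  have r: "e / m ^ i > 0" using e mp by simp
  have sp: "\<sigma> * sqrt (0 - tsg e m (Suc i)) > 0" using \<sigma> tf(3)[of "Suc i"] by simp
  have cp: "cg \<sigma> e m i / 2 > 0" using \<sigma> r by (simp add: cg_def)
  have "measure M {\<omega>\<in>space M. \<bar>X 0 \<omega> - X (tsg e m (Suc i)) \<omega>\<bar> \<ge> cg \<sigma> e m i / 2}
      \<le> (\<sigma> * sqrt (0 - tsg e m (Suc i)))\<^sup>2 / (cg \<sigma> e m i / 2)\<^sup>2"
    by (rule normal_chebyshev[OF bm_prob[OF bm] sp cp D])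
  also have "(\<sigma> * sqrt (0 - tsg e m (Suc i)))\<^sup>2 = \<sigma>\<^sup>2 * (e / m ^ Suc i)"
    using e m by (simp add: tsg_def power_mult_distrib)
  also have "(cg \<sigma> e m i / 2)\<^sup>2 = \<sigma>\<^sup>2 * (e / m ^ i) / 16"
    using r by (simp add: cg_def power_mult_distrib power_divide)
  also have "\<sigma>\<^sup>2 * (e / m ^ Suc i) / (\<sigma>\<^sup>2 * (e / m ^ i) / 16) = 16 / m"
    using \<sigma> e mp m by (simp add: field_simps)
  finally show ?thesis .
qed

lemma inc_tail:
  assumes bm: "bm_on M \<sigma> (-e) e X" and \<sigma>: "\<sigma> > 0" and e: "e > 0" and m: "m \<ge> 2"
  shows "measure M {\<omega>\<in>space M. X (tsg e m (Suc i)) \<omega> - X (tsg e m i) \<omega> > cg \<sigma> e m i / 2} \<ge> 1/4"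
    "measure M {\<omega>\<in>space M. X (tsg e m (Suc i)) \<omega> - X (tsg e m i) \<omega> < - (cg \<sigma> e m i / 2)} \<ge> 1/4"
proof -
  note tf = tsg_facts[OF e m]
  have le: "tsg e m (Suc i) \<le> e" using tf(3)[of "Suc i"] e by simp
  have D: "distributed M lborel (\<lambda>\<omega>. X (tsg e m (Suc i)) \<omega> - X (tsg e m i) \<omega>)
     (\<lambda>x. ennreal (normal_density 0 (\<sigma> * sqrt (tsg e m (Suc i) - tsg e m i)) x))"
    using bm_inc_dist[OF bm tf(4) tf(1) le] .
  define r where "r = e / m ^ i"
  have mp: "m ^ i > 0" using m by simp
  have r: "r > 0" using e mp by (simp add: r_def)
  have d: "tsg e m (Suc i) - tsg e m i = r * (1 - 1/m)" using tf(5) by (simp add: r_def)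
  have q: "1 - 1/m \<ge> 1/4" using m by (simp add: field_simps)
  have sp: "\<sigma> * sqrt (tsg e m (Suc i) - tsg e m i) > 0" using \<sigma> tf(1) by simp
  have b0: "0 \<le> cg \<sigma> e m i / 2" using \<sigma> r by (simp add: cg_def r_def[symmetric])
  have s4: "sqrt (4::real) = 2" using real_sqrt_abs[of 2] by simp
  have "sqrt r = sqrt (4 * (r / 4))" by simp
  also have "\<dots> = sqrt 4 * sqrt (r/4)" by (simp only: real_sqrt_mult)
  also have "\<dots> = 2 * sqrt (r/4)" by (simp only: s4)
  also have "\<dots> \<le> 2 * sqrt (r * (1 - 1/m))"
    using r q by (intro mult_left_mono real_sqrt_le_mono) (auto intro: mult_left_mono[of "1/4" _ r, simplified])
  finally have "sqrt r \<le> 2 * sqrt (r * (1 - 1/m))" .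
  then have "\<sigma> * sqrt r \<le> \<sigma> * (2 * sqrt (r * (1 - 1/m)))" using \<sigma> by (intro mult_left_mono) auto
  then have b1: "cg \<sigma> e m i / 2 \<le> \<sigma> * sqrt (tsg e m (Suc i) - tsg e m i) / 2"
    by (simp add: cg_def r_def[symmetric] d)
  show "measure M {\<omega>\<in>space M. X (tsg e m (Suc i)) \<omega> - X (tsg e m i) \<omega> > cg \<sigma> e m i / 2} \<ge> 1/4"
    "measure M {\<omega>\<in>space M. X (tsg e m (Suc i)) \<omega> - X (tsg e m i) \<omega> < - (cg \<sigma> e m i / 2)} \<ge> 1/4"
    using normal_tail_lower[OF bm_prob[OF bm] sp b0 b1 D] by auto
qed


lemma bm_grid_meas:
  assumes bm: "bm_on M \<sigma> (-e) e Y" and e: "e > 0" and m: "m \<ge> 2"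
  shows "Y (tsg e m i) \<in> borel_measurable M" "Y 0 \<in> borel_measurable M"
proof -
  have "tsg e m i \<le> e" using tsg_facts(3)[OF e m, of i] e by linarith
  then show "Y (tsg e m i) \<in> borel_measurable M" using bm_meas[OF bm] tsg_facts(4)[OF e m, of i] by auto
  show "Y 0 \<in> borel_measurable M" using bm_meas[OF bm] e by auto
qed

lemma lemA:
  assumes bm: "bm_on M \<sigma> (-e) e Y" and \<sigma>: "\<sigma> > 0" and e: "e > 0" and m: "m \<ge> 2"
  shows "measure M {\<omega>\<in>space M. \<forall>i\<le>n. Y 0 \<omega> - Y (tsg e m i) \<omega> \<le> v i}
     \<le> (\<Prod>i<n. fg \<sigma> e m i (v i - v (Suc i))) + (\<Sum>i<n. 16/m + (if v (Suc i) > cg \<sigma> e m i / 2 then 1 else 0))"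
proof -
  interpret prob_space M using bm_prob[OF bm] .
  note tf = tsg_facts[OF e m]
  note [measurable] = bm_grid_meas[OF bm e m]
  define c where "c i = cg \<sigma> e m i" for i
  define inc where "inc i \<omega> = Y (tsg e m (Suc i)) \<omega> - Y (tsg e m i) \<omega>" for i \<omega>
  define A where "A = {\<omega>\<in>space M. \<forall>i\<le>n. Y 0 \<omega> - Y (tsg e m i) \<omega> \<le> v i}"
  define I where "I = {\<omega>\<in>space M. \<forall>i<n. inc i \<omega> \<le> v i - v (Suc i) + c i}"
  define U where "U i = {\<omega>\<in>space M. Y 0 \<omega> - Y (tsg e m (Suc i)) \<omega> < v (Suc i) - c i}" for i
  have [measurable]: "\<And>i. inc i \<in> borel_measurable M" unfolding inc_def by measurable
  have sA: "A \<in> sets M" unfolding A_def by measurable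
  have sI: "I \<in> sets M" unfolding I_def by measurable
  have sU: "\<And>i. U i \<in> sets M" unfolding U_def by measurable
  have sUU: "(\<Union>i<n. U i) \<in> sets M" using sU by auto
  have AIU: "A \<subseteq> I \<union> (\<Union>i<n. U i)"
  proof
    fix \<omega> assume \<omega>: "\<omega> \<in> A"
    show "\<omega> \<in> I \<union> (\<Union>i<n. U i)"
    proof (cases "\<omega> \<in> (\<Union>i<n. U i)")
      case False
      have "\<forall>i<n. inc i \<omega> \<le> v i - v (Suc i) + c i"
      proof (intro allI impI)
        fix i assume i: "i < n"
        have "\<omega> \<notin> U i" using False i by auto
        then have "Y 0 \<omega> - Y (tsg e m (Suc i)) \<omega> \<ge> v (Suc i) - c i" using \<omega> by (auto simp: U_def A_def)
        moreover have "Y 0 \<omega> - Y (tsg e m i) \<omega> \<le> v i" using \<omega> i by (auto simp: A_def)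
        ultimately show "inc i \<omega> \<le> v i - v (Suc i) + c i" by (simp add: inc_def)
      qed
      then show ?thesis using \<omega> by (auto simp: I_def A_def)
    qed auto
  qed
  have "measure M A \<le> measure M (I \<union> (\<Union>i<n. U i))"
    using AIU sI sUU by (intro finite_measure_mono) auto
  also have "\<dots> \<le> measure M I + measure M (\<Union>i<n. U i)"
    using sI sUU by (intro measure_subadditive) auto
  also have "measure M (\<Union>i<n. U i) \<le> (\<Sum>i<n. measure M (U i))"
    using sU by (intro finite_measure_subadditive_finite) auto
  finally have step1: "measure M A \<le> measure M I + (\<Sum>i<n. measure M (U i))" by simp
  have indep: "indep_vars (\<lambda>_. borel) inc {..<n}"
  proof -
    have "tsg e m n \<le> e" using tf(3)[of n] e by linarith
    then show ?thesis using bm_indep[OF bm, of "tsg e m" n] tf unfolding inc_def by auto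
  qed
  have fac: "measure M {\<omega>\<in>space M. inc i \<omega> \<le> v i - v (Suc i) + c i} \<le> fg \<sigma> e m i (v i - v (Suc i))" for i
  proof (cases "v i - v (Suc i) \<le> - (c i / 2)")
    case True
    have s1: "{\<omega>\<in>space M. inc i \<omega> > c i / 2} \<in> sets M" by measurable
    have "measure M {\<omega>\<in>space M. inc i \<omega> \<le> v i - v (Suc i) + c i} \<le> measure M (space M - {\<omega>\<in>space M. inc i \<omega> > c i / 2})"
      using True by (intro finite_measure_mono) auto
    also have "\<dots> = 1 - measure M {\<omega>\<in>space M. inc i \<omega> > c i / 2}" using prob_compl[OF s1] .
    also have "\<dots> \<le> 3/4" using inc_tail(1)[OF bm \<sigma> e m, of i] by (simp add: inc_def c_def)
    finally show ?thesis using True by (simp add: fg_def c_def)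
  next
    case False
    then show ?thesis by (simp add: fg_def c_def)
  qed
  have mI: "measure M I \<le> (\<Prod>i<n. fg \<sigma> e m i (v i - v (Suc i)))"
  proof (cases "n = 0")
    case True
    then have "I = space M" by (simp add: I_def)
    then show ?thesis using True by simp
  next
    case False
    have Ieq: "I = (\<Inter>i\<in>{..<n}. inc i -` {.. v i - v (Suc i) + c i} \<inter> space M)"
      using False by (auto simp: I_def)
    then have "measure M I = (\<Prod>i<n. measure M (inc i -` {.. v i - v (Suc i) + c i} \<inter> space M))"
    proof -
      have ne: "{..<n} \<noteq> {}" using False by auto
      show ?thesis using indep_varsD[OF indep, of "{..<n}" "\<lambda>i. {.. v i - v (Suc i) + c i}"] ne Ieq by simp
    qed
    also have "\<dots> = (\<Prod>i<n. measure M {\<omega>\<in>space M. inc i \<omega> \<le> v i - v (Suc i) + c i})"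
      by (intro prod.cong refl arg_cong[where f="measure M"]) auto
    also have "\<dots> \<le> (\<Prod>i<n. fg \<sigma> e m i (v i - v (Suc i)))"
      using fac by (intro prod_mono) auto
    finally show ?thesis .
  qed
  have mU: "measure M (U i) \<le> 16/m + (if v (Suc i) > cg \<sigma> e m i / 2 then 1 else 0)" for i
  proof (cases "v (Suc i) > cg \<sigma> e m i / 2")
    case True
    have h1: "measure M (U i) \<le> 1" by simp
    have h2: "0 \<le> 16/m" using m by simp
    have "measure M (U i) \<le> 16/m + 1" using h1 h2 by linarith
    then show ?thesis using True by simp
  next
    case False
    have "U i \<subseteq> {\<omega>\<in>space M. \<bar>Y 0 \<omega> - Y (tsg e m (Suc i)) \<omega>\<bar> \<ge> cg \<sigma> e m i / 2}"
      using False by (auto simp: U_def c_def abs_if)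
    then have "measure M (U i) \<le> measure M {\<omega>\<in>space M. \<bar>Y 0 \<omega> - Y (tsg e m (Suc i)) \<omega>\<bar> \<ge> cg \<sigma> e m i / 2}"
      by (intro finite_measure_mono) measurable
    also have "\<dots> \<le> 16/m" by (rule cheb16[OF bm \<sigma> e m])
    finally show ?thesis using False by simp
  qed
  have "(\<Sum>i<n. measure M (U i)) \<le> (\<Sum>i<n. 16/m + (if v (Suc i) > cg \<sigma> e m i / 2 then 1 else 0))"
    using mU by (intro sum_mono) auto
  then show ?thesis using step1 mI unfolding A_def by linarith
qed


lemma int_ind:
  assumes "prob_space N" "S \<in> sets N"
  shows "(\<integral>\<omega>. 1 - 1/4 * indicator S \<omega> \<partial>N) = (1 - 1/4 * measure N S :: real)"
    "integrable N (\<lambda>\<omega>. 1 - 1/4 * indicator S \<omega> :: real)"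
proof -
  interpret prob_space N by fact
  have i1: "integrable N (\<lambda>\<omega>. 1::real)" by simp
  have i2: "integrable N (\<lambda>\<omega>. 1/4 * indicator S \<omega> :: real)" using assms(2)
    by (intro integrable_mult_right integrable_real_indicator) (auto simp: emeasure_eq_measure)
  show "integrable N (\<lambda>\<omega>. 1 - 1/4 * indicator S \<omega> :: real)" using i1 i2 by (rule Bochner_Integration.integrable_diff)
  have "(\<integral>\<omega>. 1 - 1/4 * indicator S \<omega> \<partial>N) = (\<integral>\<omega>. 1 \<partial>N) - (\<integral>\<omega>. 1/4 * indicator S \<omega> \<partial>N :: real)"
    using i1 i2 by (rule Bochner_Integration.integral_diff)
  also have "\<dots> = 1 - 1/4 * measure N S" using assms(2) by (simp add: prob_space)
  finally show "(\<integral>\<omega>. 1 - 1/4 * indicator S \<omega> \<partial>N) = (1 - 1/4 * measure N S :: real)" .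
qed

lemma fg_meas[measurable]: "fg \<sigma> e m i \<in> borel_measurable borel"
  unfolding fg_def by measurable

lemma fg_bounds: "0 \<le> fg \<sigma> e m i x" "fg \<sigma> e m i x \<le> 1"
  by (auto simp: fg_def)

lemma lemB:
  assumes bm: "bm_on N \<sigma> (-e) e V" and \<sigma>: "\<sigma> > 0" and e: "e > 0" and m: "m \<ge> 2"
  shows "(\<integral>\<^sup>+\<omega>. ennreal ((\<Prod>i<n. fg \<sigma> e m i ((V 0 \<omega> - V (tsg e m i) \<omega>) - (V 0 \<omega> - V (tsg e m (Suc i)) \<omega>)))
      + (\<Sum>i<n. 16/m + (if V 0 \<omega> - V (tsg e m (Suc i)) \<omega> > cg \<sigma> e m i / 2 then 1 else 0))) \<partial>N)
    \<le> ennreal ((15/16)^n + 32 * real n / m)"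
proof -
  interpret prob_space N using bm_prob[OF bm] .
  note tf = tsg_facts[OF e m]
  note [measurable] = bm_grid_meas[OF bm e m]
  define inc where "inc i \<omega> = V (tsg e m (Suc i)) \<omega> - V (tsg e m i) \<omega>" for i \<omega>
  have [measurable]: "\<And>i. inc i \<in> borel_measurable N" unfolding inc_def by measurable
  define Pf where "Pf \<omega> = (\<Prod>i<n. fg \<sigma> e m i (inc i \<omega>))" for \<omega>
  define Sf where "Sf \<omega> = (\<Sum>i<n. 16/m + (if V 0 \<omega> - V (tsg e m (Suc i)) \<omega> > cg \<sigma> e m i / 2 then 1 else 0::real))" for \<omega>
  have [measurable]: "Pf \<in> borel_measurable N" unfolding Pf_def by measurable
  have [measurable]: "Sf \<in> borel_measurable N" unfolding Sf_def by measurable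
  have Pf0: "0 \<le> Pf \<omega>" for \<omega> unfolding Pf_def by (intro prod_nonneg) (auto simp: fg_bounds)
  have Sf0: "0 \<le> Sf \<omega>" for \<omega> unfolding Sf_def using m by (intro sum_nonneg) auto
  have eqi: "(\<Prod>i<n. fg \<sigma> e m i ((V 0 \<omega> - V (tsg e m i) \<omega>) - (V 0 \<omega> - V (tsg e m (Suc i)) \<omega>))) = Pf \<omega>" for \<omega>
    unfolding Pf_def inc_def by (intro prod.cong refl) (simp add: algebra_simps)
  have split: "(\<integral>\<^sup>+\<omega>. ennreal (Pf \<omega> + Sf \<omega>) \<partial>N) = (\<integral>\<^sup>+\<omega>. ennreal (Pf \<omega>) \<partial>N) + (\<integral>\<^sup>+\<omega>. ennreal (Sf \<omega>) \<partial>N)"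
    using Pf0 Sf0 by (subst ennreal_plus) (auto intro!: nn_integral_add)
  have indep: "indep_vars (\<lambda>_. borel) inc {..<n}"
  proof -
    have "tsg e m n \<le> e" using tf(3)[of n] e by linarith
    then show ?thesis using bm_indep[OF bm, of "tsg e m" n] tf unfolding inc_def by auto
  qed
  have indep2: "indep_vars (\<lambda>_. borel) (\<lambda>i \<omega>. ennreal (fg \<sigma> e m i (inc i \<omega>))) {..<n}"
    using indep_vars_compose2[OF indep, of "\<lambda>i x. ennreal (fg \<sigma> e m i x)" "\<lambda>_. borel"] by measurable
  have fac: "(\<integral>\<^sup>+\<omega>. ennreal (fg \<sigma> e m i (inc i \<omega>)) \<partial>N) = ennreal (\<integral>\<omega>. fg \<sigma> e m i (inc i \<omega>) \<partial>N)"
    "(\<integral>\<omega>. fg \<sigma> e m i (inc i \<omega>) \<partial>N) \<le> 15/16" "0 \<le> (\<integral>\<omega>. fg \<sigma> e m i (inc i \<omega>) \<partial>N)" for i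
  proof -
    have int: "integrable N (\<lambda>\<omega>. fg \<sigma> e m i (inc i \<omega>))"
      by (rule integrable_const_bound[where B=1]) (auto simp: fg_bounds abs_le_iff intro: order.trans[OF _ fg_bounds(2)])
    show "(\<integral>\<^sup>+\<omega>. ennreal (fg \<sigma> e m i (inc i \<omega>)) \<partial>N) = ennreal (\<integral>\<omega>. fg \<sigma> e m i (inc i \<omega>) \<partial>N)"
      using int by (intro nn_integral_eq_integral) (auto simp: fg_bounds)
    show "0 \<le> (\<integral>\<omega>. fg \<sigma> e m i (inc i \<omega>) \<partial>N)" by (intro integral_nonneg_AE) (auto simp: fg_bounds)
    define S where "S = {\<omega>\<in>space N. inc i \<omega> < - (cg \<sigma> e m i / 2)}"
    have sS: "S \<in> sets N" unfolding S_def by measurable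
    have "(\<integral>\<omega>. fg \<sigma> e m i (inc i \<omega>) \<partial>N) \<le> (\<integral>\<omega>. 1 - 1/4 * indicator S \<omega> \<partial>N)"
      using int int_ind(2)[OF prob_space_axioms sS]
      by (intro integral_mono) (auto simp: fg_def S_def indicator_def)
    also have "\<dots> = 1 - 1/4 * measure N S" by (rule int_ind(1)[OF prob_space_axioms sS])
    also have "\<dots> \<le> 15/16" using inc_tail(2)[OF bm \<sigma> e m, of i] by (simp add: S_def inc_def)
    finally show "(\<integral>\<omega>. fg \<sigma> e m i (inc i \<omega>) \<partial>N) \<le> 15/16" .
  qed
  have "(\<integral>\<^sup>+\<omega>. ennreal (Pf \<omega>) \<partial>N) = (\<integral>\<^sup>+\<omega>. (\<Prod>i<n. ennreal (fg \<sigma> e m i (inc i \<omega>))) \<partial>N)"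
    unfolding Pf_def by (subst prod_ennreal) (auto simp: fg_bounds)
  also have "\<dots> = (\<Prod>i<n. \<integral>\<^sup>+\<omega>. ennreal (fg \<sigma> e m i (inc i \<omega>)) \<partial>N)"
    by (rule indep_vars_nn_integral[OF _ indep2]) auto
  also have "\<dots> = (\<Prod>i<n. ennreal (\<integral>\<omega>. fg \<sigma> e m i (inc i \<omega>) \<partial>N))" using fac(1) by simp
  also have "\<dots> = ennreal (\<Prod>i<n. (\<integral>\<omega>. fg \<sigma> e m i (inc i \<omega>) \<partial>N))" using fac(3) by (subst prod_ennreal) auto
  also have "\<dots> \<le> ennreal (\<Prod>i<n. (15/16::real))"
    using fac(2,3) by (intro ennreal_leI prod_mono) auto
  finally have Pb: "(\<integral>\<^sup>+\<omega>. ennreal (Pf \<omega>) \<partial>N) \<le> ennreal ((15/16)^n)" by simp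
  have tm: "(\<integral>\<^sup>+\<omega>. ennreal (16/m + (if V 0 \<omega> - V (tsg e m (Suc i)) \<omega> > cg \<sigma> e m i / 2 then 1 else 0)) \<partial>N) \<le> ennreal (32/m)" for i
  proof -
    define Q where "Q = {\<omega>\<in>space N. \<bar>V 0 \<omega> - V (tsg e m (Suc i)) \<omega>\<bar> \<ge> cg \<sigma> e m i / 2}"
    have sQ: "Q \<in> sets N" unfolding Q_def by measurable
    have m16: "0 \<le> 16/m" using m by simp
    have "(\<integral>\<^sup>+\<omega>. ennreal (16/m + (if V 0 \<omega> - V (tsg e m (Suc i)) \<omega> > cg \<sigma> e m i / 2 then 1 else 0)) \<partial>N)
       \<le> (\<integral>\<^sup>+\<omega>. ennreal (16/m) + indicator Q \<omega> \<partial>N)"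
    proof (intro nn_integral_mono)
      fix \<omega> assume \<omega>: "\<omega> \<in> space N"
      show "ennreal (16/m + (if V 0 \<omega> - V (tsg e m (Suc i)) \<omega> > cg \<sigma> e m i / 2 then 1 else 0)) \<le> ennreal (16/m) + indicator Q \<omega>"
      proof (cases "V 0 \<omega> - V (tsg e m (Suc i)) \<omega> > cg \<sigma> e m i / 2")
        case True
        then have "\<omega> \<in> Q" using \<omega> by (auto simp: Q_def abs_if)
        then show ?thesis using True m16 by (simp add: ennreal_plus)
      next
        case False
        then show ?thesis by (simp add: indicator_def)
      qed
    qed
    also have "\<dots> = ennreal (16/m) + emeasure N Q"
      using sQ by (subst nn_integral_add) (auto simp: emeasure_space_1)
    also have "emeasure N Q = ennreal (measure N Q)" by (simp add: emeasure_eq_measure)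
    also have "measure N Q \<le> 16/m" unfolding Q_def by (rule cheb16[OF bm \<sigma> e m])
    then have "ennreal (16/m) + ennreal (measure N Q) \<le> ennreal (16/m) + ennreal (16/m)"
      by (intro add_left_mono ennreal_leI)
    also have "\<dots> = ennreal (32/m)" using m16 by (simp add: ennreal_plus[symmetric] del: ennreal_plus)
    finally show ?thesis by simp
  qed
  have "(\<integral>\<^sup>+\<omega>. ennreal (Sf \<omega>) \<partial>N) = (\<integral>\<^sup>+\<omega>. (\<Sum>i<n. ennreal (16/m + (if V 0 \<omega> - V (tsg e m (Suc i)) \<omega> > cg \<sigma> e m i / 2 then 1 else 0))) \<partial>N)"
    unfolding Sf_def using m by (subst sum_ennreal) auto
  also have "\<dots> = (\<Sum>i<n. \<integral>\<^sup>+\<omega>. ennreal (16/m + (if V 0 \<omega> - V (tsg e m (Suc i)) \<omega> > cg \<sigma> e m i / 2 then 1 else 0)) \<partial>N)"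
    by (rule nn_integral_sum) measurable
  also have "\<dots> \<le> (\<Sum>i<n. ennreal (32/m))" using tm by (intro sum_mono) auto
  also have "\<dots> = ennreal (32 * real n / m)" using m by (subst sum_ennreal) auto
  finally have Sb: "(\<integral>\<^sup>+\<omega>. ennreal (Sf \<omega>) \<partial>N) \<le> ennreal (32 * real n / m)" .
  have "(\<integral>\<^sup>+\<omega>. ennreal ((\<Prod>i<n. fg \<sigma> e m i ((V 0 \<omega> - V (tsg e m i) \<omega>) - (V 0 \<omega> - V (tsg e m (Suc i)) \<omega>)))
      + (\<Sum>i<n. 16/m + (if V 0 \<omega> - V (tsg e m (Suc i)) \<omega> > cg \<sigma> e m i / 2 then 1 else 0))) \<partial>N)
     = (\<integral>\<^sup>+\<omega>. ennreal (Pf \<omega> + Sf \<omega>) \<partial>N)" unfolding eqi Sf_def by simp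
  also have "\<dots> \<le> ennreal ((15/16)^n) + ennreal (32 * real n / m)" unfolding split using Pb Sb by (rule add_mono)
  also have "\<dots> = ennreal ((15/16)^n + 32 * real n / m)" using m by (simp add: ennreal_plus[symmetric] del: ennreal_plus)
  finally show ?thesis .
qed




lemma lemT:
  fixes M :: "'a measure" and N :: "'b measure"
  assumes bmY: "bm_on M \<sigma> (-e) e W''"
    and mW: "\<forall>t\<in>{-e..e}. W t \<in> borel_measurable M"
    and bmV: "bm_on N \<sigma> (-e) e V"
    and mWc: "\<forall>t\<in>{-e..e}. Wc t \<in> borel_measurable N"
    and dom: "\<forall>\<omega>\<in>space N. \<forall>i. Wc 0 \<omega> - Wc (tsg e m i) \<omega> \<le> V 0 \<omega> - V (tsg e m i) \<omega>"
    and law: "path_law M {-e..e} W = path_law N {-e..e} Wc"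
    and ind: "prob_space.indep_var M (Pi\<^sub>M {-e..e} (\<lambda>_. borel)) (path_map {-e..e} W)
           (Pi\<^sub>M {-e..e} (\<lambda>_. borel)) (path_map {-e..e} (\<lambda>t \<omega>. W'' t \<omega> - W'' (-e) \<omega>))"
    and \<sigma>: "\<sigma> > 0" and e: "e > 0" and m: "m \<ge> 2"
  shows "measure M {\<omega>\<in>space M. \<forall>i\<le>n. W'' 0 \<omega> - W'' (tsg e m i) \<omega> \<le> W 0 \<omega> - W (tsg e m i) \<omega>}
     \<le> (15/16)^n + 32 * real n / m"
proof -
  interpret M: prob_space M using bm_prob[OF bmY] .
  interpret N: prob_space N using bm_prob[OF bmV] .
  note tf = tsg_facts[OF e m]
  define I where "I = {-e..e}"
  define PI where "PI = (Pi\<^sub>M I (\<lambda>_. borel) :: (real \<Rightarrow> real) measure)"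
  define K where "K = (Pi\<^sub>M {..n} (\<lambda>_. borel) :: (nat \<Rightarrow> real) measure)"
  define pw where "pw = (\<lambda>p::real\<Rightarrow>real. \<lambda>i\<in>{..n}. p 0 - p (tsg e m i))"
  have tI: "tsg e m i \<in> I" for i using tf(3)[of i] tf(4)[of i] e by (auto simp: I_def)
  have zI: "0 \<in> I" using e by (auto simp: I_def)
  have pwm: "pw \<in> measurable PI K"
    unfolding pw_def PI_def K_def
    by (intro measurable_restrict borel_measurable_diff measurable_component_singleton zI tI)
  define Y' where "Y' = (\<lambda>t \<omega>. W'' t \<omega> - W'' (-e) \<omega>)"
  have mY: "\<forall>t\<in>I. Y' t \<in> borel_measurable M"
    using bm_meas[OF bmY] e unfolding Y'_def I_def by (auto intro!: borel_measurable_diff)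
  have pmW: "path_map I W \<in> measurable M PI"
    unfolding path_map_def PI_def using mW by (intro measurable_restrict) (auto simp: I_def)
  have pmY: "path_map I Y' \<in> measurable M PI"
    unfolding path_map_def PI_def using mY by (intro measurable_restrict) auto
  have pmWc: "path_map I Wc \<in> measurable N PI"
    unfolding path_map_def PI_def using mWc by (intro measurable_restrict) (auto simp: I_def)
  define X where "X = pw \<circ> path_map I W"
  define Yv where "Yv = pw \<circ> path_map I Y'"
  define Xc where "Xc = pw \<circ> path_map I Wc"
  have mX: "X \<in> measurable M K" unfolding X_def using pwm pmW by (rule measurable_comp[rotated])
  have mYv: "Yv \<in> measurable M K" unfolding Yv_def using pwm pmY by (rule measurable_comp[rotated])
  have mXc: "Xc \<in> measurable N K" unfolding Xc_def using pwm pmWc by (rule measurable_comp[rotated])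
  have indXY: "M.indep_var K X K Yv"
    unfolding X_def Yv_def using M.indep_var_compose[OF ind[folded I_def PI_def Y'_def] pwm pwm] .
  have Xv: "X \<omega> i = W 0 \<omega> - W (tsg e m i) \<omega>" if "i \<le> n" for \<omega> i
    using that zI tI by (simp add: X_def pw_def path_map_def)
  have Yvv: "Yv \<omega> i = W'' 0 \<omega> - W'' (tsg e m i) \<omega>" if "i \<le> n" for \<omega> i
    using that zI tI by (simp add: Yv_def pw_def path_map_def Y'_def)
  have Xcv: "Xc \<omega> i = Wc 0 \<omega> - Wc (tsg e m i) \<omega>" if "i \<le> n" for \<omega> i
    using that zI tI by (simp add: Xc_def pw_def path_map_def)
  define G where "G = {z \<in> space (K \<Otimes>\<^sub>M K). \<forall>i\<in>{..n}. snd z i \<le> fst z i}"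
  have sG: "G \<in> sets (K \<Otimes>\<^sub>M K)"
  proof -
    have "\<And>i. i \<in> {..n} \<Longrightarrow> (\<lambda>z. snd z i) \<in> borel_measurable (K \<Otimes>\<^sub>M K)"
      unfolding K_def by measurable
    moreover have "\<And>i. i \<in> {..n} \<Longrightarrow> (\<lambda>z. fst z i) \<in> borel_measurable (K \<Otimes>\<^sub>M K)"
      unfolding K_def by measurable
    ultimately have "\<And>i. i \<in> {..n} \<Longrightarrow> {z \<in> space (K \<Otimes>\<^sub>M K). snd z i \<le> fst z i} \<in> sets (K \<Otimes>\<^sub>M K)"
      by measurable
    then have "(\<Inter>i\<in>{..n}. {z \<in> space (K \<Otimes>\<^sub>M K). snd z i \<le> fst z i}) \<in> sets (K \<Otimes>\<^sub>M K)"
      by (intro sets.finite_INT) auto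
    moreover have "G = (\<Inter>i\<in>{..n}. {z \<in> space (K \<Otimes>\<^sub>M K). snd z i \<le> fst z i})"
      unfolding G_def by auto
    ultimately show ?thesis by simp
  qed
  define Bad where "Bad = {\<omega>\<in>space M. \<forall>i\<le>n. W'' 0 \<omega> - W'' (tsg e m i) \<omega> \<le> W 0 \<omega> - W (tsg e m i) \<omega>}"
  have mXY: "(\<lambda>\<omega>. (X \<omega>, Yv \<omega>)) \<in> measurable M (K \<Otimes>\<^sub>M K)" using mX mYv by (rule measurable_Pair)
  have BadG: "Bad = (\<lambda>\<omega>. (X \<omega>, Yv \<omega>)) -` G \<inter> space M"
  proof -
    have "(X \<omega>, Yv \<omega>) \<in> space (K \<Otimes>\<^sub>M K)" if "\<omega> \<in> space M" for \<omega>
      using measurable_space[OF mXY that] .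
    then show ?thesis unfolding Bad_def G_def using Xv Yvv by auto
  qed
  define DX where "DX = distr M K X"
  define DY where "DY = distr M K Yv"
  interpret DY: prob_space DY unfolding DY_def using mYv by (rule M.prob_space_distr)
  have "emeasure M Bad = emeasure (distr M (K \<Otimes>\<^sub>M K) (\<lambda>\<omega>. (X \<omega>, Yv \<omega>))) G"
    unfolding BadG using mXY sG by (simp add: emeasure_distr)
  also have "distr M (K \<Otimes>\<^sub>M K) (\<lambda>\<omega>. (X \<omega>, Yv \<omega>)) = DX \<Otimes>\<^sub>M DY"
    using indXY unfolding M.indep_var_distribution_eq DX_def DY_def by simp
  also have "emeasure (DX \<Otimes>\<^sub>M DY) G = (\<integral>\<^sup>+x. emeasure DY (Pair x -` G) \<partial>DX)"
  proof -
    have "sets (DX \<Otimes>\<^sub>M DY) = sets (K \<Otimes>\<^sub>M K)" unfolding DX_def DY_def by (intro sets_pair_measure_cong) auto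
    then show ?thesis using sG by (intro DY.emeasure_pair_measure_alt) auto
  qed
  also have "DX = distr N K Xc"
  proof -
    have "DX = distr (distr M PI (path_map I W)) K pw"
      unfolding DX_def X_def using distr_distr[OF pwm pmW] by simp
    also have "distr M PI (path_map I W) = distr N PI (path_map I Wc)"
      using law unfolding path_law_def I_def[symmetric] PI_def[symmetric] .
    also have "distr (distr N PI (path_map I Wc)) K pw = distr N K Xc"
      unfolding Xc_def using distr_distr[OF pwm pmWc] by simp
    finally show ?thesis .
  qed
  also have "(\<integral>\<^sup>+x. emeasure DY (Pair x -` G) \<partial>distr N K Xc) = (\<integral>\<^sup>+\<omega>. emeasure DY (Pair (Xc \<omega>) -` G) \<partial>N)"
  proof (rule nn_integral_distr[OF mXc])
    have "sets (K \<Otimes>\<^sub>M DY) = sets (K \<Otimes>\<^sub>M K)" unfolding DY_def by (intro sets_pair_measure_cong) auto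
    then have "(\<lambda>x. emeasure DY (Pair x -` G)) \<in> borel_measurable K"
      using sG by (intro DY.measurable_emeasure_Pair) auto
    then show "(\<lambda>x. emeasure DY (Pair x -` G)) \<in> borel_measurable (distr N K Xc)" by simp
  qed
  also have "\<dots> \<le> (\<integral>\<^sup>+\<omega>. ennreal ((\<Prod>i<n. fg \<sigma> e m i ((V 0 \<omega> - V (tsg e m i) \<omega>) - (V 0 \<omega> - V (tsg e m (Suc i)) \<omega>)))
      + (\<Sum>i<n. 16/m + (if V 0 \<omega> - V (tsg e m (Suc i)) \<omega> > cg \<sigma> e m i / 2 then 1 else 0))) \<partial>N)"
  proof (rule nn_integral_mono)
    fix \<omega> assume \<omega>: "\<omega> \<in> space N"
    define v where "v i = V 0 \<omega> - V (tsg e m i) \<omega>" for i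
    have xs: "Xc \<omega> \<in> space K" using measurable_space[OF mXc \<omega>] .
    have sec: "Pair (Xc \<omega>) -` G \<in> sets K"
    proof -
      have "Pair (Xc \<omega>) -` G \<in> sets K" using sets_Pair1[OF sG] .
      then show ?thesis .
    qed
    have "emeasure DY (Pair (Xc \<omega>) -` G) = emeasure M (Yv -` (Pair (Xc \<omega>) -` G) \<inter> space M)"
      unfolding DY_def using mYv sec by (simp add: emeasure_distr)
    also have "\<dots> \<le> emeasure M {\<omega>'\<in>space M. \<forall>i\<le>n. W'' 0 \<omega>' - W'' (tsg e m i) \<omega>' \<le> v i}"
    proof (rule emeasure_mono)
      show "Yv -` (Pair (Xc \<omega>) -` G) \<inter> space M \<subseteq> {\<omega>'\<in>space M. \<forall>i\<le>n. W'' 0 \<omega>' - W'' (tsg e m i) \<omega>' \<le> v i}"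
      proof
        fix \<omega>' assume h: "\<omega>' \<in> Yv -` (Pair (Xc \<omega>) -` G) \<inter> space M"
        then have "\<forall>i\<in>{..n}. Yv \<omega>' i \<le> Xc \<omega> i" by (auto simp: G_def)
        have "W'' 0 \<omega>' - W'' (tsg e m i) \<omega>' \<le> v i" if i: "i \<le> n" for i
        proof -
          have "W'' 0 \<omega>' - W'' (tsg e m i) \<omega>' = Yv \<omega>' i" using Yvv[OF i] by simp
          also have "\<dots> \<le> Xc \<omega> i" using \<open>\<forall>i\<in>{..n}. Yv \<omega>' i \<le> Xc \<omega> i\<close> i by simp
          also have "\<dots> = Wc 0 \<omega> - Wc (tsg e m i) \<omega>" using Xcv[OF i] .
          also have "\<dots> \<le> v i" using dom \<omega> by (simp add: v_def)
          finally show ?thesis .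
        qed
        then show "\<omega>' \<in> {\<omega>'\<in>space M. \<forall>i\<le>n. W'' 0 \<omega>' - W'' (tsg e m i) \<omega>' \<le> v i}"
          using h by simp
      qed
      show "{\<omega>'\<in>space M. \<forall>i\<le>n. W'' 0 \<omega>' - W'' (tsg e m i) \<omega>' \<le> v i} \<in> sets M"
        using bm_grid_meas[OF bmY e m] by measurable
    qed
    also have "\<dots> = ennreal (measure M {\<omega>'\<in>space M. \<forall>i\<le>n. W'' 0 \<omega>' - W'' (tsg e m i) \<omega>' \<le> v i})"
      by (simp add: M.emeasure_eq_measure)
    also have "\<dots> \<le> ennreal ((\<Prod>i<n. fg \<sigma> e m i (v i - v (Suc i))) + (\<Sum>i<n. 16/m + (if v (Suc i) > cg \<sigma> e m i / 2 then 1 else 0)))"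
      by (intro ennreal_leI lemA[OF bmY \<sigma> e m])
    finally show "emeasure DY (Pair (Xc \<omega>) -` G) \<le> ennreal ((\<Prod>i<n. fg \<sigma> e m i ((V 0 \<omega> - V (tsg e m i) \<omega>) - (V 0 \<omega> - V (tsg e m (Suc i)) \<omega>)))
      + (\<Sum>i<n. 16/m + (if V 0 \<omega> - V (tsg e m (Suc i)) \<omega> > cg \<sigma> e m i / 2 then 1 else 0)))"
      by (simp add: v_def)
  qed
  also have "\<dots> \<le> ennreal ((15/16)^n + 32 * real n / m)" by (rule lemB[OF bmV \<sigma> e m])
  finally have "emeasure M Bad \<le> ennreal ((15/16)^n + 32 * real n / m)" .
  then have e1: "ennreal (measure M Bad) \<le> ennreal ((15/16)^n + 32 * real n / m)"
    by (simp only: M.emeasure_eq_measure)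
  have r0: "0 \<le> (15/16)^n + 32 * real n / m" using m by simp
  have "measure M Bad \<le> (15/16)^n + 32 * real n / m" using e1 ennreal_le_iff[OF r0] by blast
  then show ?thesis unfolding Bad_def .
qed




lemma bm_cont: "bm_on M \<sigma> a b X \<Longrightarrow> \<omega> \<in> space M \<Longrightarrow> continuous_on {a..b} (\<lambda>t. X t \<omega>)"
  by (simp add: bm_on_def)

lemma law_cases:
  assumes h: "has_law_mu M sig e W \<or> has_law_mu_minus M sig e W \<or> has_law_mu_plus M sig e W"
    and e: "e > 0" and m: "m \<ge> 2"
  shows "cont_process M e W \<and> (\<exists>(N::aux_space measure) Wc V. bm_on N sig (-e) e V \<and>
     (\<forall>t\<in>{-e..e}. Wc t \<in> borel_measurable N) \<and>
     (\<forall>\<omega>\<in>space N. \<forall>i. Wc 0 \<omega> - Wc (tsg e m i) \<omega> \<le> V 0 \<omega> - V (tsg e m i) \<omega>) \<and>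
     path_law M {-e..e} W = path_law N {-e..e} Wc)"
proof -
  note tf = tsg_facts[OF e m]
  consider (mu) "has_law_mu M sig e W" | (minus) "has_law_mu_minus M sig e W" | (plus) "has_law_mu_plus M sig e W"
    using h by blast
  then show ?thesis
  proof cases
    case mu
    then obtain N :: "aux_space measure" and V where cp: "cont_process M e W" and
      V: "two_sided_bm N sig e V" and law: "path_law M {-e..e} W = path_law N {-e..e} V"
      unfolding has_law_mu_def by blast
    have bmV: "bm_on N sig (-e) e V" using V by (simp add: two_sided_bm_def)
    show ?thesis using cp bmV law bm_meas[OF bmV] by blast
  next
    case minus
    then obtain N :: "aux_space measure" and V B where cp: "cont_process M e W" and
      V: "two_sided_bm N sig e V" and bmB: "bm_on N sig 0 e B" and
      law: "path_law M {-e..e} W = path_law N {-e..e} (\<lambda>t \<omega>. if t \<le> 0 then V t \<omega>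
                                      else reflect 0 e (\<lambda>s. V s \<omega>) (\<lambda>s. B s \<omega>) t)"
      unfolding has_law_mu_minus_def by blast
    have bmV: "bm_on N sig (-e) e V" using V by (simp add: two_sided_bm_def)
    define Wc where "Wc = (\<lambda>t \<omega>. if t \<le> 0 then V t \<omega> else reflect 0 e (\<lambda>s. V s \<omega>) (\<lambda>s. B s \<omega>) t)"
    have mWc: "\<forall>t\<in>{-e..e}. Wc t \<in> borel_measurable N"
    proof
      fix t assume t: "t \<in> {-e..e}"
      show "Wc t \<in> borel_measurable N"
      proof (cases "t \<le> 0")
        case True
        then show ?thesis using bm_meas[OF bmV t] by (simp add: Wc_def)
      next
        case False
        have "(\<lambda>\<omega>. reflect 0 e (\<lambda>s. V s \<omega>) (\<lambda>s. B s \<omega>) t) \<in> borel_measurable N"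
        proof (rule meas_reflect)
          show "0 \<le> t" "t \<le> e" using False t by auto
          show "\<forall>\<omega>\<in>space N. continuous_on {0..e} (\<lambda>s. V s \<omega>)"
          proof
            fix \<omega> assume "\<omega> \<in> space N"
            then have "continuous_on {-e..e} (\<lambda>s. V s \<omega>)" using bm_cont[OF bmV] by blast
            then show "continuous_on {0..e} (\<lambda>s. V s \<omega>)" by (rule continuous_on_subset) auto
          qed
          show "\<forall>\<omega>\<in>space N. continuous_on {0..e} (\<lambda>s. B s \<omega>)" using bm_cont[OF bmB] by auto
          show "\<forall>s\<in>{0..e}. V s \<in> borel_measurable N" using bm_meas[OF bmV] e by auto
          show "\<forall>s\<in>{0..e}. B s \<in> borel_measurable N" using bm_meas[OF bmB] by auto
        qed
        then show ?thesis using False by (simp add: Wc_def)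
      qed
    qed
    have dom: "\<forall>\<omega>\<in>space N. \<forall>i. Wc 0 \<omega> - Wc (tsg e m i) \<omega> \<le> V 0 \<omega> - V (tsg e m i) \<omega>"
      using tf(3) by (simp add: Wc_def less_imp_le)
    show ?thesis using cp bmV mWc dom law[folded Wc_def] by blast
  next
    case plus
    then obtain N :: "aux_space measure" and V B where cp: "cont_process M e W" and
      V: "two_sided_bm N sig e V" and bmB: "bm_on N sig 0 e B" and B0: "\<forall>\<omega>\<in>space N. B 0 \<omega> = 0" and
      law: "path_law M {-e..e} W = path_law N {-e..e} (\<lambda>t \<omega>. if 0 \<le> t then V t \<omega>
                                      else reflect 0 e (\<lambda>s. V (-s) \<omega>) (\<lambda>s. B s \<omega>) (-t))"
      unfolding has_law_mu_plus_def by blast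
    have bmV: "bm_on N sig (-e) e V" using V by (simp add: two_sided_bm_def)
    have V0: "\<forall>\<omega>\<in>space N. V 0 \<omega> = 0" using V by (simp add: two_sided_bm_def)
    define Wc where "Wc = (\<lambda>t \<omega>. if 0 \<le> t then V t \<omega> else reflect 0 e (\<lambda>s. V (-s) \<omega>) (\<lambda>s. B s \<omega>) (-t))"
    have cVm: "continuous_on {0..e} (\<lambda>s. V (-s) \<omega>)" if "\<omega> \<in> space N" for \<omega>
    proof -
      have c: "continuous_on {-e..e} (\<lambda>t. V t \<omega>)" using bm_cont[OF bmV that] .
      have "continuous_on {0..e} (\<lambda>s. - s)" by (intro continuous_intros)
      moreover have "(\<lambda>s. - s) ` {0..e} \<subseteq> {-e..e}" by auto
      ultimately show ?thesis using continuous_on_compose2[OF c] by blast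
    qed
    have mWc: "\<forall>t\<in>{-e..e}. Wc t \<in> borel_measurable N"
    proof
      fix t assume t: "t \<in> {-e..e}"
      show "Wc t \<in> borel_measurable N"
      proof (cases "0 \<le> t")
        case True
        then show ?thesis using bm_meas[OF bmV t] by (simp add: Wc_def)
      next
        case False
        have "(\<lambda>\<omega>. reflect 0 e (\<lambda>s. V (-s) \<omega>) (\<lambda>s. B s \<omega>) (-t)) \<in> borel_measurable N"
        proof (rule meas_reflect[where F="\<lambda>s. V (-s)"])
          show "0 \<le> -t" "-t \<le> e" using False t by auto
          show "\<forall>\<omega>\<in>space N. continuous_on {0..e} (\<lambda>s. V (-s) \<omega>)" using cVm by auto
          show "\<forall>\<omega>\<in>space N. continuous_on {0..e} (\<lambda>s. B s \<omega>)" using bm_cont[OF bmB] by auto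
          show "\<forall>s\<in>{0..e}. V (-s) \<in> borel_measurable N" using bm_meas[OF bmV] by auto
          show "\<forall>s\<in>{0..e}. B s \<in> borel_measurable N" using bm_meas[OF bmB] by auto
        qed
        then show ?thesis using False by (simp add: Wc_def)
      qed
    qed
    have dom: "\<forall>\<omega>\<in>space N. \<forall>i. Wc 0 \<omega> - Wc (tsg e m i) \<omega> \<le> V 0 \<omega> - V (tsg e m i) \<omega>"
    proof (intro ballI allI)
      fix \<omega> i assume \<omega>: "\<omega> \<in> space N"
      define s where "s = - tsg e m i"
      have s: "0 \<le> s" "s \<le> e" using tf(3)[of i] tf(4)[of i] by (auto simp: s_def)
      have "reflect 0 e (\<lambda>s. V (-s) \<omega>) (\<lambda>s. B s \<omega>) s \<ge> B s \<omega> + (V (-s) \<omega> - B s \<omega>)"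
        using reflect_ge[of 0 s s e "\<lambda>s. V (-s) \<omega>" "\<lambda>s. B s \<omega>"] s cVm[OF \<omega>] bm_cont[OF bmB \<omega>] B0 V0 \<omega>
        by auto
      then have "Wc (tsg e m i) \<omega> \<ge> V (tsg e m i) \<omega>"
        using tf(3)[of i] by (simp add: Wc_def s_def)
      then show "Wc 0 \<omega> - Wc (tsg e m i) \<omega> \<le> V 0 \<omega> - V (tsg e m i) \<omega>" by (simp add: Wc_def)
    qed
    show ?thesis using cp bmV mWc dom law[folded Wc_def] by blast
  qed
qed




theorem mainTheorem17:
  fixes M :: "'a measure" and sig e \<delta> :: real and W W'' :: "real \<Rightarrow> 'a \<Rightarrow> real"
  assumes "sig > 0" and "e > 0"
    and "has_law_mu M sig e W \<or> has_law_mu_minus M sig e W \<or> has_law_mu_plus M sig e W"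
    and "bm_on M sig (-e) e W''"
    and "prob_space.indep_var M (Pi\<^sub>M {-e..e} (\<lambda>_. borel)) (path_map {-e..e} W)
           (Pi\<^sub>M {-e..e} (\<lambda>_. borel)) (path_map {-e..e} (\<lambda>t \<omega>. W'' t \<omega> - W'' (-e) \<omega>))"
    and "AE \<omega> in M. W'' (-e) \<omega> \<ge> W (-e) \<omega>"
    and "\<delta> > 0"
  shows "\<exists>e'\<in>{0<..e}.
           measure M {\<omega>\<in>space M. \<forall>t\<in>{-e'..e'}.
              reflect (-e) e (\<lambda>s. W s \<omega>) (\<lambda>s. W'' s \<omega>) t > W t \<omega>} \<ge> 1 - \<delta>"
proof -
  note sig = assms(1) and e = assms(2) and bmY = assms(4) and ind = assms(5) and AEs = assms(6) and \<delta> = assms(7)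
  interpret prob_space M using bm_prob[OF bmY] .
  obtain n :: nat where n: "(15/16::real) ^ n < \<delta>/4"
    using real_arch_pow_inv[of "\<delta>/4" "15/16::real"] \<delta> by auto
  define m :: real where "m = 2 + 128 * real n / \<delta>"
  have m2: "m \<ge> 2" using \<delta> by (simp add: m_def)
  have "32 * real n / m \<le> \<delta>/4"
  proof -
    have mp: "m > 0" using m2 by simp
    have "128 * real n \<le> \<delta> * m" using \<delta> by (simp add: m_def field_simps)
    then show ?thesis using mp \<delta> by (simp add: field_simps)
  qed
  with n have bnd: "(15/16)^n + 32 * real n / m \<le> \<delta>/2" by simp
  obtain N :: "aux_space measure" and Wc V where cp: "cont_process M e W" and bmV: "bm_on N sig (-e) e V"
    and mWc: "\<forall>t\<in>{-e..e}. Wc t \<in> borel_measurable N"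
    and dom: "\<forall>\<omega>\<in>space N. \<forall>i. Wc 0 \<omega> - Wc (tsg e m i) \<omega> \<le> V 0 \<omega> - V (tsg e m i) \<omega>"
    and law: "path_law M {-e..e} W = path_law N {-e..e} Wc"
    using law_cases[OF assms(3) e m2] by blast
  have mW: "\<forall>t\<in>{-e..e}. W t \<in> borel_measurable M" and cW: "\<forall>\<omega>\<in>space M. continuous_on {-e..e} (\<lambda>t. W t \<omega>)"
    using cp by (auto simp: cont_process_def)
  have cY: "\<forall>\<omega>\<in>space M. continuous_on {-e..e} (\<lambda>t. W'' t \<omega>)" using bmY by (simp add: bm_on_def)
  have mY: "\<forall>t\<in>{-e..e}. W'' t \<in> borel_measurable M" using bmY by (simp add: bm_on_def)
  define Bad where "Bad = {\<omega>\<in>space M. \<forall>i\<le>n. W'' 0 \<omega> - W'' (tsg e m i) \<omega> \<le> W 0 \<omega> - W (tsg e m i) \<omega>}"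
  have PBad: "measure M Bad \<le> \<delta>/2"
    using lemT[OF bmY mW bmV mWc dom law ind sig e m2, of n] bnd unfolding Bad_def by linarith
  have sBad: "Bad \<in> sets M"
  proof -
    have mWt: "W (tsg e m i) \<in> borel_measurable M" for i
    proof -
      have "tsg e m i \<in> {-e..e}" using tsg_facts(3,4)[OF e m2, of i] e by auto
      then show ?thesis using mW by blast
    qed
    have mW0: "W 0 \<in> borel_measurable M" using mW e by auto
    note [measurable] = mWt mW0 bm_grid_meas[OF bmY e m2]
    have each: "{\<omega>\<in>space M. W'' 0 \<omega> - W'' (tsg e m i) \<omega> \<le> W 0 \<omega> - W (tsg e m i) \<omega>} \<in> sets M" for i
      by measurable
    have "Bad = space M \<inter> (\<Inter>i\<in>{..n}. {\<omega>\<in>space M. W'' 0 \<omega> - W'' (tsg e m i) \<omega> \<le> W 0 \<omega> - W (tsg e m i) \<omega>})"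
      unfolding Bad_def by auto
    also have "\<dots> \<in> sets M" using each by (intro sets.Int sets.top sets.finite_INT) auto
    finally show ?thesis .
  qed
  define Good where "Good = {\<omega>\<in>space M. W'' (-e) \<omega> \<ge> W (-e) \<omega>}"
  have sGood: "Good \<in> sets M"
  proof -
    have [measurable]: "W (-e) \<in> borel_measurable M" "W'' (-e) \<in> borel_measurable M" using mW mY e by auto
    show ?thesis unfolding Good_def by measurable
  qed
  have PGood: "measure M Good = 1"
  proof -
    have "AE \<omega> in M. \<omega> \<in> Good" using AEs by (auto simp: Good_def)
    then show ?thesis using sGood by (simp add: prob_eq_1)
  qed
  define g where "g t \<omega> = reflect (-e) e (\<lambda>s. W s \<omega>) (\<lambda>s. W'' s \<omega>) t - W t \<omega>" for t \<omega>
  have cg: "continuous_on {-e..e} (\<lambda>t. g t \<omega>)" if "\<omega> \<in> space M" for \<omega>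
    unfolding g_def using reflect_cont[of "-e" e "\<lambda>s. W s \<omega>" "\<lambda>s. W'' s \<omega>"] e cW cY that
    by (intro continuous_intros) auto
  have mg: "g t \<in> borel_measurable M" if "t \<in> {-e..e}" for t
    unfolding g_def using meas_reflect[of "-e" t e M W W''] that cW cY mW mY
    by (intro borel_measurable_diff) auto
  have g0: "g 0 \<omega> > 0" if "\<omega> \<in> Good" "\<omega> \<notin> Bad" for \<omega>
  proof (rule ccontr)
    assume "\<not> g 0 \<omega> > 0"
    then have le: "g 0 \<omega> \<le> 0" by simp
    have \<omega>: "\<omega> \<in> space M" using that by (simp add: Good_def)
    have "W'' 0 \<omega> - W'' (tsg e m i) \<omega> \<le> W 0 \<omega> - W (tsg e m i) \<omega>" if "i \<le> n" for i
    proof -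
      have s: "-e \<le> tsg e m i" "tsg e m i \<le> 0" using tsg_facts(3,4)[OF e m2, of i] by auto
      have "reflect (-e) e (\<lambda>s. W s \<omega>) (\<lambda>s. W'' s \<omega>) 0 \<ge> W'' 0 \<omega> + (W (tsg e m i) \<omega> - W'' (tsg e m i) \<omega>)"
        using reflect_ge[of "-e" "tsg e m i" 0 e "\<lambda>s. W s \<omega>" "\<lambda>s. W'' s \<omega>"] s e cW cY \<omega> \<open>\<omega> \<in> Good\<close>
        by (auto simp: Good_def)
      then show ?thesis using le by (simp add: g_def)
    qed
    then have "\<omega> \<in> Bad" using \<omega> by (simp add: Bad_def)
    then show False using that by simp
  qed
  define S where "S k = {\<omega>\<in>space M. \<forall>t\<in>{-(e / real (Suc k))..e / real (Suc k)}.
              reflect (-e) e (\<lambda>s. W s \<omega>) (\<lambda>s. W'' s \<omega>) t > W t \<omega>}" for k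
  have ek: "e / real (Suc k) \<le> e" "0 < e / real (Suc k)" for k
    using e by (auto simp: divide_le_eq)
  have Sg: "S k = {\<omega>\<in>space M. \<forall>t\<in>{-(e / real (Suc k))..e / real (Suc k)}. g t \<omega> > 0}" for k
    unfolding S_def g_def by simp
  have sS: "S k \<in> sets M" for k
  proof -
    have sub: "{-(e / real (Suc k))..e / real (Suc k)} \<subseteq> {-e..e}" using ek[of k] by auto
    have "{\<omega>\<in>space M. \<forall>t\<in>{-(e / real (Suc k))..e / real (Suc k)}. g t \<omega> > 0} \<in> sets M"
    proof (rule meas_pos)
      show "- (e / real (Suc k)) \<le> e / real (Suc k)" using ek[of k] by simp
      show "\<forall>\<omega>\<in>space M. continuous_on {- (e / real (Suc k))..e / real (Suc k)} (\<lambda>t. g t \<omega>)"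
        using cg continuous_on_subset[OF _ sub] by blast
      show "\<forall>t\<in>{- (e / real (Suc k))..e / real (Suc k)}. g t \<in> borel_measurable M"
        using mg sub by blast
    qed
    then show ?thesis using Sg by simp
  qed
  have inc: "incseq S"
  proof (rule incseq_SucI)
    fix k
    have "e / real (Suc (Suc k)) \<le> e / real (Suc k)" using e by (simp add: frac_le)
    then show "S k \<subseteq> S (Suc k)" unfolding S_def by auto
  qed
  have GB: "Good - Bad \<subseteq> (\<Union>k. S k)"
  proof
    fix \<omega> assume \<omega>G: "\<omega> \<in> Good - Bad"
    then have \<omega>: "\<omega> \<in> space M" by (simp add: Good_def)
    have pos: "g 0 \<omega> > 0" using g0 \<omega>G by auto
    have z: "0 \<in> {-e..e}" using e by simp
    have "\<forall>x\<in>{-e..e}. \<forall>\<epsilon>>0. \<exists>\<delta>>0. \<forall>x'\<in>{-e..e}. dist x' x < \<delta> \<longrightarrow> dist (g x' \<omega>) (g x \<omega>) < \<epsilon>"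
      using cg[OF \<omega>] unfolding continuous_on_iff .
    then obtain d where d: "d > 0" "\<forall>t\<in>{-e..e}. dist t 0 < d \<longrightarrow> dist (g t \<omega>) (g 0 \<omega>) < g 0 \<omega>"
      using z pos by blast
    obtain k0 :: nat where k0: "e / d < real k0" using reals_Archimedean2 by blast
    define k where "k = k0"
    have k: "e / d < real (Suc k)" using k0 by (simp add: k_def)
    have kd: "e / real (Suc k) < d" using k d(1) e by (simp add: divide_less_eq field_simps)
    have "\<forall>t\<in>{-(e / real (Suc k))..e / real (Suc k)}. g t \<omega> > 0"
    proof
      fix t assume t: "t \<in> {-(e / real (Suc k))..e / real (Suc k)}"
      then have "t \<in> {-e..e}" using ek[of k] by auto
      moreover have "dist t 0 < d" using t kd by (auto simp: dist_real_def)
      ultimately have "dist (g t \<omega>) (g 0 \<omega>) < g 0 \<omega>" using d by blast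
      then show "g t \<omega> > 0" by (auto simp: dist_real_def)
    qed
    then have "\<omega> \<in> S k" using \<omega> Sg by simp
    then show "\<omega> \<in> (\<Union>k. S k)" by blast
  qed
  have "measure M (Good - Bad) \<ge> 1 - \<delta>/2"
  proof -
    have sGB: "Good - Bad \<in> sets M" using sGood sBad by auto
    have "measure M Good \<le> measure M ((Good - Bad) \<union> Bad)"
      using sGood sBad by (intro finite_measure_mono) auto
    also have "\<dots> \<le> measure M (Good - Bad) + measure M Bad"
      using sGB sBad by (intro measure_subadditive) auto
    finally have "measure M Good \<le> measure M (Good - Bad) + measure M Bad" .
    then show ?thesis using PGood PBad by linarith
  qed
  moreover have "measure M (Good - Bad) \<le> measure M (\<Union>k. S k)"
    using GB sS by (intro finite_measure_mono) auto
  ultimately have big: "measure M (\<Union>k. S k) > 1 - \<delta>" using \<delta> by linarith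
  have lim: "(\<lambda>k. measure M (S k)) \<longlonglongrightarrow> measure M (\<Union>k. S k)"
    using sS inc by (intro finite_Lim_measure_incseq) auto
  then have "eventually (\<lambda>k. measure M (S k) > 1 - \<delta>) sequentially"
    using big by (rule order_tendstoD(1))
  then obtain k where k: "measure M (S k) > 1 - \<delta>" by (auto simp: eventually_sequentially)
  show ?thesis
  proof (rule bexI[of _ "e / real (Suc k)"])
    show "e / real (Suc k) \<in> {0<..e}" using ek[of k] by simp
    show "measure M {\<omega>\<in>space M. \<forall>t\<in>{-(e / real (Suc k))..e / real (Suc k)}.
              reflect (-e) e (\<lambda>s. W s \<omega>) (\<lambda>s. W'' s \<omega>) t > W t \<omega>} \<ge> 1 - \<delta>"
      using k unfolding S_def by simp
  qed
qed


end
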